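(* Let $\mathcal{T}$ be a finite total order, $\mathcal{G}$ a finite grid poset, $S\subseteq\mathcal{T}\times\mathcal{G}$ a spread, $A=\min S$ and $B=\max S$ (so $S=\uparrow A\cap\downarrow B$). Let \[ \mathcal{Q}=\pi_0\big(\{0\}\cup A\cup(A+e_0)\cup(B+e_0)\cup(B+2e_0)\big)\times\mathcal{G}\subseteq\mathcal{T}\times\mathcal{G}, \] where $0$ is the minimum of $\mathcal{T}\times\mathcal{G}$. Then $\mathcal{Q}$ contains $\min S$ and $\operatorname{cover}S$, and, for every spread $R$ such that $\mathbb{k}_R$ is a direct summand of the domain of a minimal spread-radical approximation of $\mathbb{k}_S$, $\mathcal{Q}$ contains $\min R$ and $\operatorname{cover}R$.
   Context: Fix a field $\mathbb{k}$. Identify $\mathcal{T}=[m_0]$, $\mathcal{G}=[m_1]\times\cdots\times[m_n]$ ($[m]=\{0<\dots<m-1\}$), with product order; $\pi_0$ is projection to $\mathcal{T}$. $x+e_0$ replaces the $0$-th coordinate of $x$ by $\min(m_0-1,\pi_0(x)+1)$; $B+2e_0=(B+e_0)+e_0$; $X+e_0=\{x+e_0:x\in X\}$. $\uparrow X,\downarrow X$ are the upset and downset generated by $X$; $\operatorname{cover}X=\min(\uparrow X\setminus X)$. A spread is a nonempty convex zigzag-connected subset; $\mathbb{k}_R$ its indicator representation in $\operatorname{rep}(\mathcal{T}\times\mathcal{G})$ (functors to finite-dimensional vector spaces). In the full subcategory $\mathcal{C}$ of finite direct sums of spread representations, the radical $\operatorname{rad}_\mathcal{C}(X,Y)$ is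 the additive subfunctor of Hom consisting of non-isomorphisms between indecomposables; a minimal spread-radical approximation of $M\in\mathcal{C}$ is a right minimal morphism $\rho:C\to M$, $C\in\mathcal{C}$, such that for every $A'\in\mathcal{C}$ the image of $\operatorname{Hom}(A',C)\to\operatorname{Hom}(A',M)$ equals $\operatorname{rad}_\mathcal{C}(A',M)$. *)

theory Defs
  imports "Jordan_Normal_Form.Matrix"
begin

(* Points of T x G = [m0] x [m1] x ... x [mn] are nat lists of length n+1;
   coordinate 0 is the T-coordinate. ms = [m0, m1, ..., mn]. *)

definition grid :: "nat list \<Rightarrow> nat list set" where
  "grid ms = {x. length x = length ms \<and> (\<forall>i<length ms. x ! i < ms ! i)}"

definition le_pt :: "nat list \<Rightarrow> nat list \<Rightarrow> bool" where
  "le_pt x y \<longleftrightarrow> length x = length y \<and> (\<forall>i<length x. x ! i \<le> y ! i)"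

definition upset :: "nat list \<Rightarrow> nat list set \<Rightarrow> nat list set" where
  "upset ms X = {y \<in> grid ms. \<exists>x\<in>X. le_pt x y}"

definition downset :: "nat list \<Rightarrow> nat list set \<Rightarrow> nat list set" where
  "downset ms X = {y \<in> grid ms. \<exists>x\<in>X. le_pt y x}"

definition minimals :: "nat list set \<Rightarrow> nat list set" where
  "minimals X = {x \<in> X. \<forall>y\<in>X. le_pt y x \<longrightarrow> y = x}"

definition maximals :: "nat list set \<Rightarrow> nat list set" where
  "maximals X = {x \<in> X. \<forall>y\<in>X. le_pt x y \<longrightarrow> y = x}"

definition cover :: "nat list \<Rightarrow> nat list set \<Rightarrow> nat list set" where
  "cover ms X = minimals (upset ms X - X)"

definition plus_e0 :: "nat list \<Rightarrow> nat list \<Rightarrow> nat list" where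
  "plus_e0 ms x = x[0 := min (ms ! 0 - 1) (x ! 0 + 1)]"

definition zero_pt :: "nat list \<Rightarrow> nat list" where
  "zero_pt ms = replicate (length ms) 0"

definition comparable :: "nat list \<Rightarrow> nat list \<Rightarrow> bool" where
  "comparable x y \<longleftrightarrow> le_pt x y \<or> le_pt y x"

definition spread :: "nat list \<Rightarrow> nat list set \<Rightarrow> bool" where
  "spread ms S \<longleftrightarrow> S \<subseteq> grid ms \<and> S \<noteq> {} \<and>
     (\<forall>x\<in>S. \<forall>y\<in>grid ms. \<forall>z\<in>S. le_pt x y \<and> le_pt y z \<longrightarrow> y \<in> S) \<and>
     (\<forall>x\<in>S. \<forall>y\<in>S. (x, y) \<in> ({(a, b). a \<in> S \<and> b \<in> S \<and> comparable a b})\<^sup>*)"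

(* Representations of the poset grid ms over a field: finite-dimensional
   spaces k^(dim x) and structure matrices rmap x y : k^(dim x) -> k^(dim y) *)
record 'a rep =
  rdim :: "nat list \<Rightarrow> nat"
  rmap :: "nat list \<Rightarrow> nat list \<Rightarrow> 'a mat"

definition is_rep :: "nat list \<Rightarrow> 'a::field rep \<Rightarrow> bool" where
  "is_rep ms V \<longleftrightarrow>
     (\<forall>x\<in>grid ms. \<forall>y\<in>grid ms. le_pt x y \<longrightarrow> rmap V x y \<in> carrier_mat (rdim V y) (rdim V x)) \<and>
     (\<forall>x\<in>grid ms. rmap V x x = 1\<^sub>m (rdim V x)) \<and>
     (\<forall>x\<in>grid ms. \<forall>y\<in>grid ms. \<forall>z\<in>grid ms. le_pt x y \<and> le_pt y z \<longrightarrow>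
        rmap V y z * rmap V x y = rmap V x z)"

definition is_hom :: "nat list \<Rightarrow> 'a::field rep \<Rightarrow> 'a rep \<Rightarrow> (nat list \<Rightarrow> 'a mat) \<Rightarrow> bool" where
  "is_hom ms V W f \<longleftrightarrow>
     (\<forall>x\<in>grid ms. f x \<in> carrier_mat (rdim W x) (rdim V x)) \<and>
     (\<forall>x\<in>grid ms. \<forall>y\<in>grid ms. le_pt x y \<longrightarrow> f y * rmap V x y = rmap W x y * f x)"

definition hcomp :: "(nat list \<Rightarrow> 'a::field mat) \<Rightarrow> (nat list \<Rightarrow> 'a mat) \<Rightarrow> nat list \<Rightarrow> 'a mat" where
  "hcomp g f = (\<lambda>x. g x * f x)"

definition is_iso :: "nat list \<Rightarrow> 'a::field rep \<Rightarrow> 'a rep \<Rightarrow> (nat list \<Rightarrow> 'a mat) \<Rightarrow> bool" where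
  "is_iso ms V W f \<longleftrightarrow> is_hom ms V W f \<and>
     (\<exists>g. is_hom ms W V g \<and> (\<forall>x\<in>grid ms. g x * f x = 1\<^sub>m (rdim V x) \<and> f x * g x = 1\<^sub>m (rdim W x)))"

definition zero_rep :: "'a::field rep" where
  "zero_rep = \<lparr>rdim = (\<lambda>x. 0), rmap = (\<lambda>x y. 0\<^sub>m 0 0)\<rparr>"

definition dsum2 :: "'a::field rep \<Rightarrow> 'a rep \<Rightarrow> 'a rep" where
  "dsum2 V W = \<lparr>rdim = (\<lambda>x. rdim V x + rdim W x),
     rmap = (\<lambda>x y. four_block_mat (rmap V x y) (0\<^sub>m (rdim V y) (rdim W x))
                                  (0\<^sub>m (rdim W y) (rdim V x)) (rmap W x y))\<rparr>"

definition dsum_list :: "'a::field rep list \<Rightarrow> 'a rep" where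
  "dsum_list Vs = foldr dsum2 Vs zero_rep"

definition offset :: "'a::field rep list \<Rightarrow> nat \<Rightarrow> nat list \<Rightarrow> nat" where
  "offset Vs i x = sum_list (map (\<lambda>V. rdim V x) (take i Vs))"

(* component (Vs!i) -> (Ws!j) of a morphism dsum_list Vs -> dsum_list Ws *)
definition component :: "'a::field rep list \<Rightarrow> 'a rep list \<Rightarrow> (nat list \<Rightarrow> 'a mat)
    \<Rightarrow> nat \<Rightarrow> nat \<Rightarrow> nat list \<Rightarrow> 'a mat" where
  "component Vs Ws f i j = (\<lambda>x. mat (rdim (Ws ! j) x) (rdim (Vs ! i) x)
       (\<lambda>(a, b). f x $$ (offset Ws j x + a, offset Vs i x + b)))"

definition spread_rep :: "nat list set \<Rightarrow> 'a::field rep" where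
  "spread_rep R = \<lparr>rdim = (\<lambda>x. if x \<in> R then 1 else 0),
     rmap = (\<lambda>x y. if x \<in> R \<and> y \<in> R then 1\<^sub>m 1
                   else 0\<^sub>m (if y \<in> R then 1 else 0) (if x \<in> R then 1 else 0))\<rparr>"

definition spreads_sum :: "nat list set list \<Rightarrow> 'a::field rep" where
  "spreads_sum Rs = dsum_list (map spread_rep Rs)"

definition in_C :: "nat list \<Rightarrow> 'a::field rep \<Rightarrow> bool" where
  "in_C ms V \<longleftrightarrow> is_rep ms V \<and>
     (\<exists>Rs. (\<forall>R\<in>set Rs. spread ms R) \<and> (\<exists>\<alpha>. is_iso ms (spreads_sum Rs) V \<alpha>))"

(* rad_C(X,Y): the additive extension of non-isomorphisms between indecomposables
   (spread representations), computed via decompositions into spread representations *)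
definition in_rad :: "nat list \<Rightarrow> 'a::field rep \<Rightarrow> 'a rep \<Rightarrow> (nat list \<Rightarrow> 'a mat) \<Rightarrow> bool" where
  "in_rad ms X Y f \<longleftrightarrow> in_C ms X \<and> in_C ms Y \<and> is_hom ms X Y f \<and>
     (\<exists>Rs Ss \<alpha> \<beta>. (\<forall>R\<in>set Rs. spread ms R) \<and> (\<forall>S\<in>set Ss. spread ms S) \<and>
        is_iso ms (spreads_sum Rs) X \<alpha> \<and> is_iso ms Y (spreads_sum Ss) \<beta> \<and>
        (\<forall>i<length Rs. \<forall>j<length Ss.
           \<not> is_iso ms (spread_rep (Rs ! i)) (spread_rep (Ss ! j))
               (component (map spread_rep Rs) (map spread_rep Ss) (hcomp \<beta> (hcomp f \<alpha>)) i j)))"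

definition right_minimal :: "nat list \<Rightarrow> 'a::field rep \<Rightarrow> 'a rep \<Rightarrow> (nat list \<Rightarrow> 'a mat) \<Rightarrow> bool" where
  "right_minimal ms C M \<rho> \<longleftrightarrow>
     (\<forall>\<phi>. is_hom ms C C \<phi> \<and> (\<forall>x\<in>grid ms. \<rho> x * \<phi> x = \<rho> x) \<longrightarrow> is_iso ms C C \<phi>)"

definition min_spread_rad_approx :: "nat list \<Rightarrow> 'a::field rep \<Rightarrow> 'a rep \<Rightarrow> (nat list \<Rightarrow> 'a mat) \<Rightarrow> bool" where
  "min_spread_rad_approx ms M C \<rho> \<longleftrightarrow> in_C ms C \<and> is_hom ms C M \<rho> \<and> right_minimal ms C M \<rho> \<and>
     (\<forall>A'. in_C ms A' \<longrightarrow> (\<forall>g. is_hom ms A' M g \<longrightarrow>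
        (in_rad ms A' M g \<longleftrightarrow> (\<exists>h. is_hom ms A' C h \<and> (\<forall>x\<in>grid ms. \<rho> x * h x = g x)))))"

definition direct_summand :: "nat list \<Rightarrow> 'a::field rep \<Rightarrow> 'a rep \<Rightarrow> bool" where
  "direct_summand ms V C \<longleftrightarrow> (\<exists>X \<alpha>. is_rep ms X \<and> is_iso ms (dsum2 V X) C \<alpha>)"

definition Qset :: "nat list \<Rightarrow> nat list set \<Rightarrow> nat list set" where
  "Qset ms S = (let A = minimals S; B = maximals S in
     {x \<in> grid ms. x ! 0 \<in> (\<lambda>p. p ! 0) `
        ({zero_pt ms} \<union> A \<union> plus_e0 ms ` A \<union> plus_e0 ms ` B
         \<union> plus_e0 ms ` plus_e0 ms ` B)})"

end

theory Submission
  imports Defs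
begin

lemma nth_upd0: "x[0 := t] ! i = (if i = 0 \<and> 0 < length x then t else x ! i)"
  by (cases x; cases i) auto


lemma le_pt_refl: "le_pt x x" by (simp add: le_pt_def)
lemma le_pt_trans: assumes "le_pt x y" "le_pt y z" shows "le_pt x z"
  unfolding le_pt_def
proof (intro conjI allI impI)
  show "length x = length z" using assms by (simp add: le_pt_def)
  fix i assume "i < length x"
  hence "x ! i \<le> y ! i" "y ! i \<le> z ! i" using assms by (auto simp: le_pt_def)
  thus "x ! i \<le> z ! i" by simp
qed

lemma le_pt_antisym: assumes "le_pt x y" "le_pt y x" shows "x = y"
proof (rule nth_equalityI)
  show "length x = length y" using assms by (simp add: le_pt_def)
  fix i assume "i < length x"
  hence "x ! i \<le> y ! i" "y ! i \<le> x ! i" using assms by (auto simp: le_pt_def)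
  thus "x ! i = y ! i" by simp
qed

lemma sum_list_le_pt: assumes "le_pt x y" shows "sum_list x \<le> sum_list y"
proof -
  have l: "length x = length y" using assms by (simp add: le_pt_def)
  have "(\<Sum>i = 0..<length x. x ! i) \<le> (\<Sum>i = 0..<length x. y ! i)"
    using assms by (intro sum_mono) (auto simp: le_pt_def)
  thus ?thesis using l by (simp add: sum_list_sum_nth)
qed

lemma sum_list_lt_pt: assumes "le_pt x y" "x \<noteq> y" shows "sum_list x < sum_list y"
proof -
  have l: "length x = length y" using assms by (simp add: le_pt_def)
  obtain i where i: "i < length x" "x ! i \<noteq> y ! i"
  proof (rule ccontr)
    assume "\<not> thesis"
    hence "\<forall>i<length x. x ! i = y ! i" using that by blast
    hence "x = y" using l by (simp add: list_eq_iff_nth_eq)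
    thus False using assms(2) by simp
  qed
  have le: "\<forall>k\<in>{0..<length x}. x ! k \<le> y ! k" using assms(1) by (simp add: le_pt_def)
  have "x ! i \<le> y ! i" using le i(1) by simp
  hence "x ! i < y ! i" using i(2) by simp
  hence ex: "\<exists>k\<in>{0..<length x}. x ! k < y ! k" using i by auto
  have "(\<Sum>i = 0..<length x. x ! i) < (\<Sum>i = 0..<length x. y ! i)"
    by (rule sum_strict_mono_ex1[OF finite_atLeastLessThan le ex])
  thus ?thesis using l by (simp add: sum_list_sum_nth)
qed

lemma sum_list_grid: assumes "x \<in> grid ms" shows "sum_list x \<le> sum_list ms"
proof -
  have "le_pt x ms" using assms by (auto simp: grid_def le_pt_def less_imp_le)
  thus ?thesis by (rule sum_list_le_pt)
qed

lemma exists_min_below: assumes "x \<in> X" shows "\<exists>a\<in>minimals X. le_pt a x"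
proof -
  let ?P = "\<lambda>y. y \<in> X \<and> le_pt y x"
  have "?P x" using assms le_pt_refl by blast
  from ex_has_least_nat[of ?P x sum_list, OF this] obtain a where
    a: "?P a" "\<And>y. ?P y \<Longrightarrow> sum_list a \<le> sum_list y" by blast
  have "a \<in> minimals X"
    unfolding minimals_def
  proof (safe)
    show "a \<in> X" using a by simp
    fix y assume y: "y \<in> X" "le_pt y a"
    show "y = a"
    proof (rule ccontr)
      assume "y \<noteq> a"
      hence "sum_list y < sum_list a" using sum_list_lt_pt y by blast
      moreover have "?P y" using y a le_pt_trans by blast
      hence "sum_list a \<le> sum_list y" using a(2) by blast
      ultimately show False by linarith
    qed
  qed
  thus ?thesis using a by blast
qed

lemma exists_max_above: assumes "x \<in> X" "X \<subseteq> grid ms" shows "\<exists>b\<in>maximals X. le_pt x b"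
proof -
  let ?P = "\<lambda>y. y \<in> X \<and> le_pt x y"
  have "?P x" using assms le_pt_refl by blast
  from ex_has_least_nat[of ?P x "\<lambda>y. sum_list ms - sum_list y", OF this] obtain b where
    b: "?P b" "\<And>y. ?P y \<Longrightarrow> sum_list ms - sum_list b \<le> sum_list ms - sum_list y" by blast
  have "b \<in> maximals X"
    unfolding maximals_def
  proof (safe)
    show "b \<in> X" using b by simp
    fix y assume y: "y \<in> X" "le_pt b y"
    show "y = b"
    proof (rule ccontr)
      assume "y \<noteq> b"
      hence "sum_list b < sum_list y" using sum_list_lt_pt y by metis
      moreover have "sum_list y \<le> sum_list ms" using y assms sum_list_grid by blast
      moreover have "?P y" using y b le_pt_trans by blast
      hence "sum_list ms - sum_list b \<le> sum_list ms - sum_list y" using b(2) by blast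
      ultimately show False by linarith
    qed
  qed
  thus ?thesis using b by blast
qed

lemma minimals_sub: "minimals X \<subseteq> X" by (auto simp: minimals_def)
lemma maximals_sub: "maximals X \<subseteq> X" by (auto simp: maximals_def)

definition Q0 :: "nat list \<Rightarrow> nat list set \<Rightarrow> nat set" where
  "Q0 ms S = (\<lambda>p. p ! 0) ` ({zero_pt ms} \<union> minimals S \<union> plus_e0 ms ` minimals S \<union> plus_e0 ms ` maximals S
         \<union> plus_e0 ms ` plus_e0 ms ` maximals S)"

lemma Qset_eq: "Qset ms S = {x \<in> grid ms. x ! 0 \<in> Q0 ms S}"
  by (simp add: Qset_def Q0_def Let_def)

definition fclosed :: "nat list \<Rightarrow> nat list set \<Rightarrow> nat list set \<Rightarrow> bool" where
  "fclosed ms S X \<longleftrightarrow> (\<forall>x\<in>grid ms. x ! 0 \<notin> Q0 ms S \<longrightarrow> (x \<in> X \<longleftrightarrow> x[0 := x ! 0 - 1] \<in> X))"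

lemma grid_len: "x \<in> grid ms \<Longrightarrow> length x = length ms" by (simp add: grid_def)

lemma grid_upd0: "x \<in> grid ms \<Longrightarrow> t < ms ! 0 \<Longrightarrow> x[0 := t] \<in> grid ms"
  by (auto simp: grid_def nth_upd0)

lemma le_pt_upd0_le: "t \<le> x ! 0 \<Longrightarrow> le_pt (x[0 := t]) x"
  by (auto simp: le_pt_def nth_upd0)

lemma le_pt_upd0_both: "le_pt x y \<Longrightarrow> s \<le> t \<Longrightarrow> le_pt (x[0 := s]) (y[0 := t])"
  by (auto simp: le_pt_def nth_upd0)

lemma le_pt_upd0_left: "le_pt x y \<Longrightarrow> s \<le> y ! 0 \<Longrightarrow> le_pt (x[0 := s]) y"
  by (auto simp: le_pt_def nth_upd0)

lemma le_pt_upd0_right: "le_pt x y \<Longrightarrow> x ! 0 \<le> t \<Longrightarrow> length y > 0 \<Longrightarrow> le_pt x (y[0 := t])"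
  by (auto simp: le_pt_def nth_upd0)

lemma upd0_neq: "length x > 0 \<Longrightarrow> t \<noteq> x ! 0 \<Longrightarrow> x[0 := t] \<noteq> x"
  by (metis nth_list_update_eq)

lemma zero_in_Q0: "ms \<noteq> [] \<Longrightarrow> 0 \<in> Q0 ms S"
  unfolding Q0_def by (rule image_eqI[of _ _ "zero_pt ms"]) (auto simp: zero_pt_def)

lemma fclosedD: assumes "fclosed ms S X" "x \<in> grid ms" "x ! 0 \<notin> Q0 ms S"
  shows "x \<in> X \<longleftrightarrow> x[0 := x ! 0 - 1] \<in> X"
proof -
  have "\<forall>x\<in>grid ms. x ! 0 \<notin> Q0 ms S \<longrightarrow> (x \<in> X \<longleftrightarrow> x[0 := x ! 0 - 1] \<in> X)"
    using assms(1) by (simp only: fclosed_def)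
  from this[rule_format, OF assms(2,3)] show ?thesis .
qed

lemma fclosed_min_cover:
  assumes ne: "ms \<noteq> []" and sub: "X \<subseteq> grid ms" and fc: "fclosed ms S X"
  shows "minimals X \<subseteq> Qset ms S \<and> cover ms X \<subseteq> Qset ms S"
proof
  show "minimals X \<subseteq> Qset ms S"
  proof
    fix m assume m: "m \<in> minimals X"
    hence mX: "m \<in> X" and mg: "m \<in> grid ms" using sub by (auto simp: minimals_def)
    have "m ! 0 \<in> Q0 ms S"
    proof (rule ccontr)
      assume nq: "m ! 0 \<notin> Q0 ms S"
      hence pos: "m ! 0 \<noteq> 0" using zero_in_Q0[OF ne] by metis
      have "m[0 := m ! 0 - 1] \<in> X" using fclosedD[OF fc mg nq] mX by blast
      moreover have "le_pt (m[0 := m ! 0 - 1]) m" by (rule le_pt_upd0_le) simp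
      moreover have "m[0 := m ! 0 - 1] \<noteq> m" using pos grid_len[OF mg] ne
        by (intro upd0_neq) auto
      ultimately show False using m unfolding minimals_def by blast
    qed
    thus "m \<in> Qset ms S" using mg by (simp add: Qset_eq)
  qed
next
  show "cover ms X \<subseteq> Qset ms S"
  proof
    fix y assume y: "y \<in> cover ms X"
    hence ym: "y \<in> minimals (upset ms X - X)" by (simp add: cover_def)
    hence yU: "y \<in> upset ms X" and yX: "y \<notin> X" by (simp_all add: minimals_def)
    have ymin: "\<And>z. z \<in> upset ms X - X \<Longrightarrow> le_pt z y \<Longrightarrow> z = y"
      using ym unfolding minimals_def by simp
    have yg: "y \<in> grid ms" using yU by (simp add: upset_def)
    obtain x where xX: "x \<in> X" and xy: "le_pt x y" using yU by (auto simp: upset_def)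
    have xg: "x \<in> grid ms" using xX sub by blast
    have ly: "length y > 0" using grid_len[OF yg] ne by simp
    have "y ! 0 \<in> Q0 ms S"
    proof (rule ccontr)
      assume nq: "y ! 0 \<notin> Q0 ms S"
      hence pos: "y ! 0 \<noteq> 0" using zero_in_Q0[OF ne] by metis
      let ?y' = "y[0 := y ! 0 - 1]"
      have y'g: "?y' \<in> grid ms" using yg ne by (intro grid_upd0) (auto simp: grid_def)
      have y'X: "?y' \<notin> X" using fclosedD[OF fc yg nq] yX by blast
      have "\<exists>z\<in>X. le_pt z ?y'"
      proof (cases "x ! 0 < y ! 0")
        case True
        hence "le_pt x ?y'" using xy ly by (intro le_pt_upd0_right) auto
        thus ?thesis using xX by blast
      next
        case False
        hence eq: "x ! 0 = y ! 0" using xy ly unfolding le_pt_def by (metis le_neq_implies_less)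
        have nqx: "x ! 0 \<notin> Q0 ms S" using nq eq by simp
        hence "x[0 := x ! 0 - 1] \<in> X" using fclosedD[OF fc xg nqx] xX by blast
        moreover have "le_pt (x[0 := x ! 0 - 1]) ?y'" using xy eq by (intro le_pt_upd0_both) auto
        ultimately show ?thesis by blast
      qed
      hence "?y' \<in> upset ms X - X" using y'g y'X unfolding upset_def by blast
      moreover have "le_pt ?y' y" by (rule le_pt_upd0_le) simp
      moreover have "?y' \<noteq> y" using pos ly by (intro upd0_neq) auto
      ultimately show False using ymin by blast
    qed
    thus "y \<in> Qset ms S" using yg by (simp add: Qset_eq)
  qed
qed

lemma le_pt_nth: "le_pt x y \<Longrightarrow> i < length x \<Longrightarrow> x ! i \<le> y ! i"
  by (simp add: le_pt_def)
lemma le_pt_len: "le_pt x y \<Longrightarrow> length x = length y"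
  by (simp add: le_pt_def)

lemma spread_convex: "spread ms X \<Longrightarrow> a \<in> X \<Longrightarrow> y \<in> grid ms \<Longrightarrow> b \<in> X \<Longrightarrow> le_pt a y \<Longrightarrow> le_pt y b \<Longrightarrow> y \<in> X"
  unfolding spread_def by blast

lemma spread_grid: "spread ms X \<Longrightarrow> X \<subseteq> grid ms"
  unfolding spread_def by blast

lemma plus_e0_0: "x \<in> grid ms \<Longrightarrow> ms \<noteq> [] \<Longrightarrow> plus_e0 ms x ! 0 = min (ms ! 0 - 1) (x ! 0 + 1)"
  unfolding plus_e0_def using grid_len[of x ms] by (simp add: nth_upd0)

lemma plus_e0_grid: "x \<in> grid ms \<Longrightarrow> ms \<noteq> [] \<Longrightarrow> 0 < ms ! 0 \<Longrightarrow> plus_e0 ms x \<in> grid ms"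
  unfolding plus_e0_def by (rule grid_upd0) auto

locale qctx =
  fixes ms :: "nat list" and S :: "nat list set"
  assumes ne: "ms \<noteq> []" and mpos: "\<forall>i<length ms. 0 < ms ! i" and spS: "spread ms S"
begin

abbreviation "m0 \<equiv> ms ! 0"
abbreviation "Q \<equiv> Q0 ms S"

lemma m0pos: "0 < m0" using ne mpos by auto

lemma S_grid: "S \<subseteq> grid ms" using spS spread_grid by blast

lemma Q_lt: assumes "q \<in> Q" shows "q < m0"
proof -
  have G: "\<And>x. x \<in> grid ms \<Longrightarrow> x ! 0 < m0" using ne by (auto simp: grid_def)
  have P: "\<And>x. x \<in> grid ms \<Longrightarrow> plus_e0 ms x \<in> grid ms" using plus_e0_grid ne m0pos by blast
  have mS: "\<And>x. x \<in> minimals S \<Longrightarrow> x \<in> grid ms" using S_grid minimals_sub by blast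
  have MS: "\<And>x. x \<in> maximals S \<Longrightarrow> x \<in> grid ms" using S_grid maximals_sub by blast
  obtain p where p: "q = p ! 0" and pin: "p \<in> {zero_pt ms} \<union> minimals S \<union> plus_e0 ms ` minimals S \<union> plus_e0 ms ` maximals S
         \<union> plus_e0 ms ` plus_e0 ms ` maximals S" using assms unfolding Q0_def by (rule imageE)
  from pin consider "p = zero_pt ms" | "p \<in> minimals S" | "p \<in> plus_e0 ms ` minimals S"
     | "p \<in> plus_e0 ms ` maximals S" | "p \<in> plus_e0 ms ` plus_e0 ms ` maximals S" by blast
  thus ?thesis
  proof cases
    case 1 thus ?thesis using p ne m0pos by (simp add: zero_pt_def)
  next
    case 2 thus ?thesis using p G mS by blast
  next
    case 3 then obtain a where "a \<in> minimals S" "p = plus_e0 ms a" by blast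
    thus ?thesis using p G mS P by blast
  next
    case 4 then obtain a where "a \<in> maximals S" "p = plus_e0 ms a" by blast
    thus ?thesis using p G MS P by blast
  next
    case 5 then obtain a where "a \<in> maximals S" "p = plus_e0 ms (plus_e0 ms a)" by blast
    thus ?thesis using p G MS P by blast
  qed
qed

lemma Q_fin: "finite Q"
  by (rule finite_subset[of _ "{..<m0}"]) (auto dest: Q_lt)

lemma minS_Q: "a \<in> minimals S \<Longrightarrow> a ! 0 \<in> Q"
  unfolding Q0_def by blast

lemma minS_Q1: assumes "a \<in> minimals S" "a ! 0 + 1 < m0" shows "a ! 0 + 1 \<in> Q"
proof -
  have g: "a \<in> grid ms" using assms S_grid minimals_sub by blast
  have "plus_e0 ms a ! 0 = a ! 0 + 1" using plus_e0_0[OF g ne] assms by simp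
  moreover have "plus_e0 ms a ! 0 \<in> Q" using assms unfolding Q0_def by blast
  ultimately show ?thesis by simp
qed

lemma maxS_Q1: assumes "b \<in> maximals S" "b ! 0 + 1 < m0" shows "b ! 0 + 1 \<in> Q"
proof -
  have g: "b \<in> grid ms" using assms S_grid maximals_sub by blast
  have "plus_e0 ms b ! 0 = b ! 0 + 1" using plus_e0_0[OF g ne] assms by simp
  moreover have "plus_e0 ms b ! 0 \<in> Q" using assms unfolding Q0_def by blast
  ultimately show ?thesis by simp
qed

lemma maxS_Q2: assumes "b \<in> maximals S" "b ! 0 + 2 < m0" shows "b ! 0 + 2 \<in> Q"
proof -
  have g: "b \<in> grid ms" using assms S_grid maximals_sub by blast
  have g2: "plus_e0 ms b \<in> grid ms" using plus_e0_grid[OF g ne m0pos] .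
  have "plus_e0 ms b ! 0 = b ! 0 + 1" using plus_e0_0[OF g ne] assms by simp
  hence "plus_e0 ms (plus_e0 ms b) ! 0 = b ! 0 + 2" using plus_e0_0[OF g2 ne] assms by simp
  moreover have "plus_e0 ms (plus_e0 ms b) ! 0 \<in> Q" using assms unfolding Q0_def by blast
  ultimately show ?thesis by simp
qed

lemma S_fclosed: "fclosed ms S S"
  unfolding fclosed_def
proof (intro ballI impI)
  fix x assume xg: "x \<in> grid ms" and nq: "x ! 0 \<notin> Q"
  have pos: "x ! 0 \<noteq> 0" using nq zero_in_Q0[OF ne] by metis
  have lx: "0 < length x" using grid_len[OF xg] ne by simp
  have xl: "x ! 0 < m0" using xg ne by (auto simp: grid_def)
  let ?x' = "x[0 := x ! 0 - 1]"
  have x'g: "?x' \<in> grid ms" using xg xl by (intro grid_upd0) auto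
  have x'x: "le_pt ?x' x" by (rule le_pt_upd0_le) simp
  show "x \<in> S \<longleftrightarrow> ?x' \<in> S"
  proof
    assume xS: "x \<in> S"
    obtain a where a: "a \<in> minimals S" "le_pt a x" using exists_min_below[OF xS] by blast
    obtain b where b: "b \<in> maximals S" "le_pt x b" using exists_max_above[OF xS S_grid] by blast
    have "a ! 0 \<noteq> x ! 0" using minS_Q[OF a(1)] nq by metis
    moreover have "a ! 0 \<le> x ! 0" using a(2) lx le_pt_nth[of a x 0] le_pt_len[of a x] by simp
    ultimately have "a ! 0 \<le> x ! 0 - 1" by simp
    hence "le_pt a ?x'" using a(2) lx by (intro le_pt_upd0_right) auto
    moreover have "le_pt ?x' b" using x'x b(2) le_pt_trans by blast
    ultimately show "?x' \<in> S" using spread_convex[OF spS _ x'g] a(1) b(1) minimals_sub maximals_sub by blast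
  next
    assume x'S: "?x' \<in> S"
    obtain a where a: "a \<in> minimals S" "le_pt a ?x'" using exists_min_below[OF x'S] by blast
    obtain b where b: "b \<in> maximals S" "le_pt ?x' b" using exists_max_above[OF x'S S_grid] by blast
    have bg: "b \<in> grid ms" using b(1) maximals_sub S_grid by blast
    have b0: "x ! 0 - 1 \<le> b ! 0" using le_pt_nth[OF b(2), of 0] lx by (simp add: nth_upd0)
    have "b ! 0 \<noteq> x ! 0 - 1"
    proof
      assume "b ! 0 = x ! 0 - 1"
      hence "b ! 0 + 1 = x ! 0" "b ! 0 + 1 < m0" using pos xl by auto
      thus False using maxS_Q1[OF b(1)] nq by metis
    qed
    hence "x ! 0 \<le> b ! 0" using b0 by simp
    have "le_pt x b"
      unfolding le_pt_def
    proof (intro conjI allI impI)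
      show "length x = length b" using le_pt_len[OF b(2)] by simp
      fix i assume i: "i < length x"
      show "x ! i \<le> b ! i"
      proof (cases "i = 0")
        case True thus ?thesis using \<open>x ! 0 \<le> b ! 0\<close> by simp
      next
        case False thus ?thesis using le_pt_nth[OF b(2), of i] i by (simp add: nth_upd0)
      qed
    qed
    moreover have "le_pt a x" using a(2) x'x le_pt_trans by blast
    ultimately show "x \<in> S" using spread_convex[OF spS _ xg] a(1) b(1) minimals_sub maximals_sub by blast
  qed
qed

lemma part12: "minimals S \<subseteq> Qset ms S \<and> cover ms S \<subseteq> Qset ms S"
  using fclosed_min_cover[OF ne S_grid S_fclosed] .

end

context qctx begin

definition nxt :: "nat \<Rightarrow> nat" where
  "nxt t = (if \<exists>q\<in>Q. t < q then Min {q\<in>Q. t < q} else m0)"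

definition topf :: "nat \<Rightarrow> nat" where
  "topf t = nxt t - 1"

definition tau :: "nat list \<Rightarrow> nat list" where
  "tau x = x[0 := topf (x ! 0)]"

lemma nxt_props:
  shows "t < m0 \<Longrightarrow> t < nxt t" and "nxt t \<le> m0" and "q \<in> Q \<Longrightarrow> t < q \<Longrightarrow> nxt t \<le> q"
    and "nxt t \<in> Q \<or> nxt t = m0"
proof -
  have fin: "finite {q\<in>Q. t < q}" using Q_fin by simp
  {
    assume ex: "\<exists>q\<in>Q. t < q"
    hence ne': "{q\<in>Q. t < q} \<noteq> {}" by blast
    have "Min {q\<in>Q. t < q} \<in> {q\<in>Q. t < q}" using Min_in[OF fin ne'] .
    hence "nxt t \<in> Q" "t < nxt t" using ex by (auto simp: nxt_def)
  } note A = this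
  show "t < m0 \<Longrightarrow> t < nxt t" using A by (cases "\<exists>q\<in>Q. t < q") (auto simp: nxt_def)
  show "nxt t \<le> m0" using A Q_lt by (cases "\<exists>q\<in>Q. t < q") (auto simp: nxt_def intro: less_imp_le)
  show "q \<in> Q \<Longrightarrow> t < q \<Longrightarrow> nxt t \<le> q"
  proof -
    assume q: "q \<in> Q" "t < q"
    hence "\<exists>q\<in>Q. t < q" by blast
    hence "nxt t = Min {q\<in>Q. t < q}" by (simp add: nxt_def)
    thus ?thesis using Min_le[OF fin] q by simp
  qed
  show "nxt t \<in> Q \<or> nxt t = m0" using A by (cases "\<exists>q\<in>Q. t < q") (auto simp: nxt_def)
qed

lemma nxt_gap: "t < s \<Longrightarrow> s < nxt t \<Longrightarrow> s \<notin> Q"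
  using nxt_props(3) by (meson leD)

lemma nxt_mono: assumes "t \<le> t'" "t' < m0" shows "nxt t \<le> nxt t'"
proof -
  have "t < nxt t'" using nxt_props(1)[OF assms(2)] assms(1) by simp
  thus ?thesis using nxt_props(4)[of t'] nxt_props(2)[of t] nxt_props(3)[of "nxt t'" t] by auto
qed

lemma top_ge: "t < m0 \<Longrightarrow> t \<le> topf t"
  using nxt_props(1)[of t] by (simp add: topf_def)

lemma top_lt: "topf t < m0"
  using nxt_props(2)[of t] m0pos by (simp add: topf_def)

lemma top_mono: "t \<le> t' \<Longrightarrow> t' < m0 \<Longrightarrow> topf t \<le> topf t'"
  using nxt_mono by (simp add: topf_def diff_le_mono)

lemma top_idem: assumes "t < m0" shows "topf (topf t) = topf t"
proof -
  have n1: "t < nxt t" using nxt_props(1)[OF assms] .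
  have a: "topf t < nxt (topf t)" using nxt_props(1)[OF top_lt] .
  have b: "nxt (topf t) \<le> nxt t"
  proof (cases "nxt t = m0")
    case True thus ?thesis using nxt_props(2) by simp
  next
    case False hence "nxt t \<in> Q" using nxt_props(4) by blast
    moreover have "topf t < nxt t" using n1 by (simp add: topf_def)
    ultimately show ?thesis using nxt_props(3) by blast
  qed
  have "nxt (topf t) = nxt t" using a b n1 by (simp add: topf_def)
  thus ?thesis by (simp add: topf_def)
qed

lemma top_single: assumes "t < m0" "t + 1 \<in> Q \<or> t + 1 = m0" shows "topf t = t"
proof -
  have "t < nxt t" using nxt_props(1)[OF assms(1)] .
  moreover have "nxt t \<le> t + 1" using assms(2) nxt_props(2,3) by auto
  ultimately show ?thesis by (simp add: topf_def)
qed

lemma top_step: assumes "0 < s" "s < m0" "s \<notin> Q" shows "topf (s - 1) = topf s"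
proof -
  have le: "nxt (s - 1) \<le> nxt s" using nxt_mono[of "s - 1" s] assms by simp
  have gt: "s - 1 < nxt (s - 1)" using nxt_props(1)[of "s - 1"] assms by simp
  have "nxt (s - 1) \<noteq> s" using nxt_props(4)[of "s - 1"] assms by auto
  hence gt2: "s < nxt (s - 1)" using gt by simp
  have "nxt s \<le> nxt (s - 1)" using nxt_props(4)[of "s - 1"] nxt_props(2)[of s] nxt_props(3)[of "nxt (s - 1)" s] gt2
    by auto
  thus ?thesis using le by (simp add: topf_def)
qed

lemma top_gapQ: "t < s \<Longrightarrow> s \<le> topf t \<Longrightarrow> s \<notin> Q"
  using nxt_gap[of t s] by (simp add: topf_def)

lemma grid0: "x \<in> grid ms \<Longrightarrow> x ! 0 < m0" using ne by (auto simp: grid_def)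
lemma gridlen0: "x \<in> grid ms \<Longrightarrow> 0 < length x" using ne grid_len by fastforce

lemma tau_grid: "x \<in> grid ms \<Longrightarrow> tau x \<in> grid ms"
  unfolding tau_def by (rule grid_upd0) (auto simp: top_lt)

lemma tau0: "x \<in> grid ms \<Longrightarrow> tau x ! 0 = topf (x ! 0)"
  unfolding tau_def using gridlen0 by (simp add: nth_upd0)

lemma le_tau: "x \<in> grid ms \<Longrightarrow> le_pt x (tau x)"
  unfolding tau_def using gridlen0 grid0 top_ge by (intro le_pt_upd0_right) (auto simp: le_pt_refl)

lemma tau_mono: assumes "x \<in> grid ms" "y \<in> grid ms" "le_pt x y" shows "le_pt (tau x) (tau y)"
proof -
  have "x ! 0 \<le> y ! 0" using le_pt_nth[OF assms(3), of 0] gridlen0[OF assms(1)] by simp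
  hence "topf (x ! 0) \<le> topf (y ! 0)" using top_mono grid0[OF assms(2)] by blast
  thus ?thesis unfolding tau_def using assms(3) by (rule le_pt_upd0_both[rotated])
qed

lemma tau_idem: "x \<in> grid ms \<Longrightarrow> tau (tau x) = tau x"
  unfolding tau_def using gridlen0 grid0 top_idem by (simp add: nth_upd0)

lemma tau_step: assumes "x \<in> grid ms" "x ! 0 \<notin> Q" shows "tau (x[0 := x ! 0 - 1]) = tau x"
proof -
  have "x ! 0 \<noteq> 0" using assms(2) zero_in_Q0[OF ne] by metis
  hence "topf (x ! 0 - 1) = topf (x ! 0)" using top_step assms grid0 by simp
  thus ?thesis unfolding tau_def using gridlen0[OF assms(1)] by (simp add: nth_upd0)
qed

lemma tau_fix: assumes "x \<in> grid ms" "x ! 0 + 1 \<in> Q \<or> x ! 0 + 1 = m0" shows "tau x = x"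
proof -
  have "topf (x ! 0) = x ! 0" using top_single grid0[OF assms(1)] assms(2) by blast
  thus ?thesis unfolding tau_def by simp
qed

lemma fclosed_sat: assumes fc: "fclosed ms S X" and xg: "x \<in> grid ms" shows "x \<in> X \<longleftrightarrow> tau x \<in> X"
proof -
  have lx: "0 < length x" using gridlen0[OF xg] .
  have "\<forall>d. x ! 0 + d \<le> topf (x ! 0) \<longrightarrow> (x[0 := x ! 0 + d] \<in> X \<longleftrightarrow> x \<in> X)"
  proof
    fix d show "x ! 0 + d \<le> topf (x ! 0) \<longrightarrow> (x[0 := x ! 0 + d] \<in> X \<longleftrightarrow> x \<in> X)"
    proof (induction d)
      case 0 thus ?case by simp
    next
      case (Suc d)
      show ?case
      proof
        assume le: "x ! 0 + Suc d \<le> topf (x ! 0)"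
        let ?s = "x ! 0 + Suc d"
        have nq: "?s \<notin> Q" using top_gapQ[of "x ! 0" ?s] le by simp
        have sl: "?s < m0" using le top_lt[of "x ! 0"] by simp
        let ?z = "x[0 := ?s]"
        have zg: "?z \<in> grid ms" using grid_upd0[OF xg sl] .
        have z0: "?z ! 0 = ?s" using lx by (simp add: nth_upd0)
        have "?z \<in> X \<longleftrightarrow> ?z[0 := ?z ! 0 - 1] \<in> X" using fclosedD[OF fc zg] nq z0 by simp
        moreover have "?z[0 := ?z ! 0 - 1] = x[0 := x ! 0 + d]" using z0 by simp
        ultimately show "?z \<in> X \<longleftrightarrow> x \<in> X" using Suc le by simp
      qed
    qed
  qed
  note H = this
  have e: "x ! 0 + (topf (x ! 0) - x ! 0) = topf (x ! 0)" using top_ge[OF grid0[OF xg]] by simp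
  have "x[0 := topf (x ! 0)] \<in> X \<longleftrightarrow> x \<in> X"
    using H[rule_format, of "topf (x ! 0) - x ! 0"] e by simp
  thus ?thesis unfolding tau_def by simp
qed

lemma S_sat: "x \<in> grid ms \<Longrightarrow> x \<in> S \<longleftrightarrow> tau x \<in> S"
  using fclosed_sat[OF S_fclosed] by blast

lemma tau_minS: assumes "a \<in> minimals S" shows "tau a = a"
proof -
  have ag: "a \<in> grid ms" using assms minimals_sub S_grid by blast
  have "a ! 0 + 1 \<in> Q \<or> a ! 0 + 1 = m0" using minS_Q1[OF assms] grid0[OF ag] by fastforce
  thus ?thesis using tau_fix[OF ag] by blast
qed

lemma tau_maxS1: assumes "b \<in> maximals S" "z \<in> grid ms" "z ! 0 = b ! 0 + 1" shows "tau z = z"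
proof -
  have "z ! 0 + 1 \<in> Q \<or> z ! 0 + 1 = m0" using maxS_Q2[OF assms(1)] grid0[OF assms(2)] assms(3) by fastforce
  thus ?thesis using tau_fix[OF assms(2)] by blast
qed

definition sat :: "nat list set \<Rightarrow> bool" where
  "sat X \<longleftrightarrow> (\<forall>x\<in>grid ms. x \<in> X \<longleftrightarrow> tau x \<in> X)"

lemma sat_fclosed: assumes "sat X" shows "fclosed ms S X"
  unfolding fclosed_def
proof (intro ballI impI)
  fix x assume xg: "x \<in> grid ms" and nq: "x ! 0 \<notin> Q"
  have "x ! 0 \<noteq> 0" using nq zero_in_Q0[OF ne] by metis
  hence x'g: "x[0 := x ! 0 - 1] \<in> grid ms" using grid_upd0[OF xg] grid0[OF xg] by simp
  have "x \<in> X \<longleftrightarrow> tau x \<in> X" using assms xg unfolding sat_def by blast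
  moreover have "x[0 := x ! 0 - 1] \<in> X \<longleftrightarrow> tau (x[0 := x ! 0 - 1]) \<in> X" using assms x'g unfolding sat_def by blast
  ultimately show "x \<in> X \<longleftrightarrow> x[0 := x ! 0 - 1] \<in> X" using tau_step[OF xg nq] by simp
qed

end

definition crel :: "nat list set \<Rightarrow> (nat list \<times> nat list) set" where
  "crel X = {(a, b). a \<in> X \<and> b \<in> X \<and> comparable a b}"

definition ccomp :: "nat list set \<Rightarrow> nat list \<Rightarrow> nat list set" where
  "ccomp X p = {y. (p, y) \<in> (crel X)\<^sup>*}"

lemma spread_conn: "spread ms X \<Longrightarrow> x \<in> X \<Longrightarrow> y \<in> X \<Longrightarrow> (x, y) \<in> (crel X)\<^sup>*"
  unfolding spread_def crel_def by blast

lemma comparable_sym: "comparable a b \<Longrightarrow> comparable b a"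
  by (auto simp: comparable_def)

lemma crel_sym: "sym (crel X)"
  unfolding crel_def sym_def by (auto simp: comparable_def)

lemma rtrancl_crel_sym: "(a, b) \<in> (crel X)\<^sup>* \<Longrightarrow> (b, a) \<in> (crel X)\<^sup>*"
  using sym_rtrancl[OF crel_sym] by (meson symD)

lemma comp_mem: assumes "y \<in> ccomp X p" "p \<in> X" shows "y \<in> X"
proof -
  have "(p, y) \<in> (crel X)\<^sup>*" using assms(1) by (simp add: ccomp_def)
  thus ?thesis
  proof (cases rule: rtranclE)
    case base thus ?thesis using assms(2) by simp
  next
    case (step z) thus ?thesis by (simp add: crel_def)
  qed
qed

lemma comp_self: "p \<in> ccomp X p" by (simp add: ccomp_def)

lemma comp_closed: assumes "y \<in> ccomp X p" "y \<in> X" "z \<in> X" "comparable y z" shows "z \<in> ccomp X p"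
proof -
  have "(p, y) \<in> (crel X)\<^sup>*" using assms(1) by (simp add: ccomp_def)
  moreover have "(y, z) \<in> crel X" using assms by (simp add: crel_def)
  ultimately have "(p, z) \<in> (crel X)\<^sup>*" by (rule rtrancl_into_rtrancl)
  thus ?thesis by (simp add: ccomp_def)
qed

lemma comp_conn: assumes "p \<in> X" "y \<in> ccomp X p" shows "(p, y) \<in> (crel (ccomp X p))\<^sup>*"
proof -
  have "(p, y) \<in> (crel X)\<^sup>*" using assms(2) by (simp add: ccomp_def)
  thus ?thesis
  proof (induction rule: rtrancl_induct)
    case base thus ?case by simp
  next
    case (step y z)
    have yc: "y \<in> ccomp X p" using step(1) by (simp add: ccomp_def)
    have zc: "z \<in> ccomp X p" using step(1,2) by (simp add: ccomp_def)
    have "(y, z) \<in> crel (ccomp X p)" using step(2) yc zc by (simp add: crel_def)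
    thus ?case using rtrancl_into_rtrancl[OF step(3)] by blast
  qed
qed

lemma comp_spread:
  assumes sub: "X \<subseteq> grid ms"
    and cvx: "\<And>x y z. x \<in> X \<Longrightarrow> y \<in> grid ms \<Longrightarrow> z \<in> X \<Longrightarrow> le_pt x y \<Longrightarrow> le_pt y z \<Longrightarrow> y \<in> X"
    and p: "p \<in> X"
  shows "spread ms (ccomp X p)"
  unfolding spread_def
proof (intro conjI ballI impI)
  show "ccomp X p \<subseteq> grid ms" using comp_mem[OF _ p] sub by blast
  show "ccomp X p \<noteq> {}" using comp_self by blast
  fix x y z assume x: "x \<in> ccomp X p" and y: "y \<in> grid ms" and z: "z \<in> ccomp X p" and le: "le_pt x y \<and> le_pt y z"
  have "y \<in> X" using cvx[OF comp_mem[OF x p] y comp_mem[OF z p]] le by blast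
  moreover have "comparable x y" using le by (simp add: comparable_def)
  ultimately show "y \<in> ccomp X p" using comp_closed[OF x comp_mem[OF x p]] by blast
next
  fix x y assume x: "x \<in> ccomp X p" and y: "y \<in> ccomp X p"
  have "(p, x) \<in> (crel (ccomp X p))\<^sup>*" using comp_conn[OF p x] .
  hence "(x, p) \<in> (crel (ccomp X p))\<^sup>*" by (rule rtrancl_crel_sym)
  moreover have "(p, y) \<in> (crel (ccomp X p))\<^sup>*" using comp_conn[OF p y] .
  ultimately show "(x, y) \<in> ({(a, b). a \<in> ccomp X p \<and> b \<in> ccomp X p \<and> comparable a b})\<^sup>*"
    unfolding crel_def[symmetric] by (rule rtrancl_trans)
qed

lemma exit_edge: assumes "(a, b) \<in> r\<^sup>*" "a \<in> P" "b \<notin> P" shows "\<exists>x y. (x, y) \<in> r \<and> x \<in> P \<and> y \<notin> P"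
  using assms
proof (induction rule: rtrancl_induct)
  case base thus ?case by simp
next
  case (step y z)
  show ?case
  proof (cases "y \<in> P")
    case True thus ?thesis using step by blast
  next
    case False thus ?thesis using step by blast
  qed
qed

lemma discrete_ivt: assumes "P lo" "\<not> P hi" "lo \<le> hi" shows "\<exists>t. lo \<le> t \<and> t < hi \<and> P t \<and> \<not> P (Suc t)"
  using assms
proof (induction hi)
  case 0 thus ?case by simp
next
  case (Suc h)
  show ?case
  proof (cases "P h")
    case True thus ?thesis using Suc by (metis le_Suc_eq lessI)
  next
    case False
    hence "lo \<le> h" using Suc by (metis le_Suc_eq)
    then obtain t where "lo \<le> t \<and> t < h \<and> P t \<and> \<not> P (Suc t)" using Suc.IH Suc.prems(1) False by blast
    thus ?thesis by auto
  qed
qed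

context qctx begin

definition Rt :: "nat list set \<Rightarrow> nat list set" where
  "Rt R = {x \<in> grid ms. tau x \<in> R}"

lemma Rt_grid: "Rt R \<subseteq> grid ms" by (auto simp: Rt_def)

lemma Rt_convex: assumes R: "spread ms R" and x: "x \<in> Rt R" and y: "y \<in> grid ms" and z: "z \<in> Rt R"
  and xy: "le_pt x y" and yz: "le_pt y z" shows "y \<in> Rt R"
proof -
  have xg: "x \<in> grid ms" and zg: "z \<in> grid ms" using x z by (auto simp: Rt_def)
  have "le_pt (tau x) (tau y)" using tau_mono[OF xg y xy] .
  moreover have "le_pt (tau y) (tau z)" using tau_mono[OF y zg yz] .
  ultimately have "tau y \<in> R" using spread_convex[OF R _ tau_grid[OF y]] x z by (auto simp: Rt_def)
  thus ?thesis using y by (simp add: Rt_def)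
qed

lemma K_spread: assumes R: "spread ms R" and p: "p \<in> Rt R" shows "spread ms (ccomp (Rt R) p)"
  by (rule comp_spread[OF Rt_grid _ p]) (rule Rt_convex[OF R])

lemma K_sub: "p \<in> Rt R \<Longrightarrow> ccomp (Rt R) p \<subseteq> Rt R"
  using comp_mem by blast

lemma le_comparable: "le_pt x y \<Longrightarrow> comparable x y" by (simp add: comparable_def)
lemma le_comparable': "le_pt x y \<Longrightarrow> comparable y x" by (simp add: comparable_def)

lemma K_sat: assumes R: "spread ms R" and p: "p \<in> Rt R" shows "sat (ccomp (Rt R) p)"
  unfolding sat_def
proof (intro ballI iffI)
  fix x assume xg: "x \<in> grid ms"
  {
    assume xK: "x \<in> ccomp (Rt R) p"
    have xR: "x \<in> Rt R" using comp_mem[OF xK p] .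
    have "tau x \<in> Rt R" using xR tau_grid[OF xg] tau_idem[OF xg] by (simp add: Rt_def)
    thus "tau x \<in> ccomp (Rt R) p" using comp_closed[OF xK xR] le_comparable[OF le_tau[OF xg]] by blast
  }
  {
    assume tK: "tau x \<in> ccomp (Rt R) p"
    have tR: "tau x \<in> Rt R" using comp_mem[OF tK p] .
    hence "x \<in> Rt R" using xg tau_idem[OF xg] by (simp add: Rt_def)
    thus "x \<in> ccomp (Rt R) p" using comp_closed[OF tK tR] le_comparable'[OF le_tau[OF xg]] by blast
  }
qed

lemma K_fclosed: "spread ms R \<Longrightarrow> p \<in> Rt R \<Longrightarrow> fclosed ms S (ccomp (Rt R) p)"
  using sat_fclosed K_sat by blast

lemma unit_up: assumes R: "spread ms R" and p: "p \<in> Rt R" and x: "x \<in> R" and yK: "y \<in> ccomp (Rt R) p"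
  and xy: "le_pt x y" shows "y \<in> R"
proof -
  have yR: "y \<in> Rt R" using comp_mem[OF yK p] .
  hence yg: "y \<in> grid ms" and "tau y \<in> R" by (auto simp: Rt_def)
  thus ?thesis using spread_convex[OF R x yg] xy le_tau[OF yg] by blast
qed

lemma unit_down: assumes R: "spread ms R" and p: "p \<in> Rt R" and x: "x \<in> R" and y: "y \<in> R"
  and yK: "y \<in> ccomp (Rt R) p" and xy: "le_pt x y" shows "x \<in> ccomp (Rt R) p"
proof -
  have xg: "x \<in> grid ms" and yg: "y \<in> grid ms" using x y R spread_grid by blast+
  have yR: "y \<in> Rt R" using comp_mem[OF yK p] .
  hence tyR: "tau y \<in> R" by (simp add: Rt_def)
  have "tau x \<in> R" using spread_convex[OF R x tau_grid[OF xg] tyR] le_tau[OF xg] tau_mono[OF xg yg xy] by blast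
  hence xR: "x \<in> Rt R" using xg by (simp add: Rt_def)
  show ?thesis using comp_closed[OF yK yR xR] le_comparable'[OF xy] by blast
qed

lemma K_ne_S: assumes R: "spread ms R" and RS: "R \<noteq> S" and p: "p \<in> Rt R"
  shows "ccomp (Rt R) p \<noteq> S"
proof
  let ?K = "ccomp (Rt R) p"
  assume KS: "?K = S"
  have Rg: "R \<subseteq> grid ms" using spread_grid[OF R] .
  have KRt: "\<And>x. x \<in> S \<Longrightarrow> x \<in> Rt R" using comp_mem[OF _ p] KS by blast
  have closeK: "\<And>z w. z \<in> Rt R \<Longrightarrow> w \<in> S \<Longrightarrow> comparable w z \<Longrightarrow> z \<in> S"
    using comp_closed KS KRt by blast
  have AR: "\<And>a. a \<in> minimals S \<Longrightarrow> a \<in> R"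
  proof -
    fix a assume a: "a \<in> minimals S"
    hence "a \<in> Rt R" using KRt minimals_sub by blast
    thus "a \<in> R" using tau_minS[OF a] by (simp add: Rt_def)
  qed
  have SR: "S \<subseteq> R"
  proof
    fix x assume xS: "x \<in> S"
    obtain a where a: "a \<in> minimals S" "le_pt a x" using exists_min_below[OF xS] by blast
    have xg: "x \<in> grid ms" using xS S_grid by blast
    have "tau x \<in> R" using KRt[OF xS] by (simp add: Rt_def)
    thus "x \<in> R" using spread_convex[OF R AR[OF a(1)] xg] a(2) le_tau[OF xg] by blast
  qed
  obtain q where qR: "q \<in> R" and qS: "q \<notin> S" using SR RS by blast
  obtain s where sS: "s \<in> S" using spS unfolding spread_def by blast
  have "(s, q) \<in> (crel R)\<^sup>*" using spread_conn[OF R SR[THEN subsetD, OF sS] qR] .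
  then obtain p' q' where e: "(p', q') \<in> crel R" and p'S: "p' \<in> S" and q'S: "q' \<notin> S"
    using exit_edge[of s q "crel R" S] sS qS by blast
  have q'R: "q' \<in> R" and cmp: "comparable p' q'" using e by (auto simp: crel_def)
  have q'g: "q' \<in> grid ms" and p'g: "p' \<in> grid ms" using q'R p'S Rg S_grid by blast+
  show False
  proof (cases "le_pt q' p'")
    case True
    have "tau p' \<in> R" using KRt[OF p'S] by (simp add: Rt_def)
    hence "tau q' \<in> R" using spread_convex[OF R q'R tau_grid[OF q'g]] le_tau[OF q'g] tau_mono[OF q'g p'g True] by blast
    hence "q' \<in> Rt R" using q'g by (simp add: Rt_def)
    hence "q' \<in> S" using closeK p'S le_comparable'[OF True] by blast
    thus False using q'S by simp
  next
    case False
    hence pq: "le_pt p' q'" using cmp by (simp add: comparable_def)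
    obtain a where a: "a \<in> minimals S" "le_pt a p'" using exists_min_below[OF p'S] by blast
    have aS: "a \<in> S" using a(1) minimals_sub by blast
    have ag: "a \<in> grid ms" using aS S_grid by blast
    have aq: "le_pt a q'" using le_pt_trans[OF a(2) pq] .
    have lq: "0 < length q'" using gridlen0[OF q'g] .
    have a0: "a ! 0 \<le> q' ! 0" using le_pt_nth[OF aq, of 0] gridlen0[OF ag] by simp
    let ?w = "q'[0 := a ! 0]"
    have wg: "?w \<in> grid ms" using grid_upd0[OF q'g grid0[OF ag]] .
    have aw: "le_pt a ?w" using le_pt_upd0_right[OF aq _ lq] by simp
    have wq: "le_pt ?w q'" using le_pt_upd0_le[OF a0] .
    have wR: "?w \<in> R" using spread_convex[OF R AR[OF a(1)] wg q'R aw wq] .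
    have w0: "?w ! 0 = a ! 0" using lq by (simp add: nth_upd0)
    have "a ! 0 + 1 \<in> Q \<or> a ! 0 + 1 = m0" using minS_Q1[OF a(1)] grid0[OF ag] by fastforce
    hence "tau ?w = ?w" using tau_fix[OF wg] w0 by simp
    hence "?w \<in> Rt R" using wR wg by (simp add: Rt_def)
    hence wS: "?w \<in> S" using closeK aS le_comparable[OF aw] by blast
    let ?P = "\<lambda>t. q'[0 := t] \<in> S"
    have "?P (a ! 0)" using wS .
    moreover have "\<not> ?P (q' ! 0)" using q'S by simp
    ultimately obtain t where t: "a ! 0 \<le> t" "t < q' ! 0" "?P t" "\<not> ?P (Suc t)"
      using discrete_ivt[of ?P "a ! 0" "q' ! 0"] a0 by blast
    let ?z = "q'[0 := Suc t]" and ?z' = "q'[0 := t]"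
    have tl: "Suc t < m0" using t(2) grid0[OF q'g] by simp
    have zg: "?z \<in> grid ms" using grid_upd0[OF q'g tl] .
    have z0: "?z ! 0 = Suc t" and z'0: "?z' ! 0 = t" using lq by (simp_all add: nth_upd0)
    obtain b where b: "b \<in> maximals S" "le_pt ?z' b" using exists_max_above[OF t(3) S_grid] by blast
    have bS: "b \<in> S" using b(1) maximals_sub by blast
    have bge: "t \<le> b ! 0" using le_pt_nth[OF b(2), of 0] lq z'0 by simp
    have wz: "le_pt ?w ?z" using le_pt_upd0_both[OF le_pt_refl, of "a ! 0" "Suc t" q'] t(1) by simp
    have az: "le_pt a ?z" using le_pt_trans[OF aw wz] .
    have b0: "b ! 0 = t"
    proof (rule ccontr)
      assume "b ! 0 \<noteq> t"
      hence "Suc t \<le> b ! 0" using bge by simp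
      hence "le_pt (?z'[0 := Suc t]) b" using le_pt_upd0_left[OF b(2)] by blast
      hence "le_pt ?z b" by simp
      hence "?z \<in> S" using spread_convex[OF spS aS zg bS az] by blast
      thus False using t(4) by simp
    qed
    have "tau ?z = ?z" using tau_maxS1[OF b(1) zg] z0 b0 by simp
    moreover have "?z \<in> R" using spread_convex[OF R wR zg q'R wz] le_pt_upd0_le[of "Suc t" q'] t(2) by simp
    ultimately have "?z \<in> Rt R" using zg by (simp add: Rt_def)
    moreover have "le_pt ?z' ?z" using le_pt_upd0_both[OF le_pt_refl, of t "Suc t" q'] by simp
    ultimately have "?z \<in> S" using closeK t(3) le_comparable by blast
    thus False using t(4) by simp
  qed
qed

end

lemma mat_dim0: "A \<in> carrier_mat n m \<Longrightarrow> B \<in> carrier_mat n m \<Longrightarrow> n = 0 \<or> m = 0 \<Longrightarrow> A = B"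
  by (rule eq_matI) auto

lemma mult_0dim: "(A :: 'a :: semiring_0 mat) \<in> carrier_mat n 0 \<Longrightarrow> B \<in> carrier_mat 0 m \<Longrightarrow> A * B = 0\<^sub>m n m"
  by (rule eq_matI) (auto simp: scalar_prod_def)

lemma mat11_eq: "A \<in> carrier_mat 1 1 \<Longrightarrow> B \<in> carrier_mat 1 1 \<Longrightarrow> A $$ (0,0) = B $$ (0,0) \<Longrightarrow> A = B"
  by (rule eq_matI) auto

lemma one_neq_zero11: "(1\<^sub>m 1 :: 'a :: field mat) \<noteq> 0\<^sub>m 1 1"
proof
  assume "(1\<^sub>m 1 :: 'a mat) = 0\<^sub>m 1 1"
  hence "(1\<^sub>m 1 :: 'a mat) $$ (0,0) = 0\<^sub>m 1 1 $$ (0,0)" by simp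
  thus False by simp
qed

definition ind :: "nat list set \<Rightarrow> nat list \<Rightarrow> nat" where
  "ind R x = (if x \<in> R then 1 else 0)"

lemma ind_in[simp]: "x \<in> R \<Longrightarrow> ind R x = 1" by (simp add: ind_def)
lemma ind_out[simp]: "x \<notin> R \<Longrightarrow> ind R x = 0" by (simp add: ind_def)

lemma rdim_sr[simp]: "rdim (spread_rep R) x = ind R x"
  by (simp add: spread_rep_def ind_def)

lemma rmap_sr: "rmap (spread_rep R) x y = (if x \<in> R \<and> y \<in> R then 1\<^sub>m 1 else 0\<^sub>m (ind R y) (ind R x))"
  by (simp add: spread_rep_def ind_def)

lemma rmap_sr_in[simp]: "x \<in> R \<Longrightarrow> y \<in> R \<Longrightarrow> rmap (spread_rep R) x y = 1\<^sub>m 1"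
  by (simp add: rmap_sr)
lemma rmap_sr_out1[simp]: "x \<notin> R \<Longrightarrow> rmap (spread_rep R) x y = 0\<^sub>m (ind R y) 0"
  by (simp add: rmap_sr)
lemma rmap_sr_out2[simp]: "y \<notin> R \<Longrightarrow> rmap (spread_rep R) x y = 0\<^sub>m 0 (ind R x)"
  by (simp add: rmap_sr)

lemma rmap_sr_carrier: "rmap (spread_rep R) x y \<in> carrier_mat (ind R y) (ind R x)"
  by (simp add: rmap_sr)

lemma is_rep_sr: assumes "spread ms R" shows "is_rep ms (spread_rep R :: 'a :: field rep)"
  unfolding is_rep_def
proof (intro conjI ballI impI)
  fix x y assume "x \<in> grid ms" "y \<in> grid ms" "le_pt x y"
  show "rmap (spread_rep R :: 'a rep) x y \<in> carrier_mat (rdim (spread_rep R :: 'a rep) y) (rdim (spread_rep R :: 'a rep) x)"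
    using rmap_sr_carrier by simp
next
  fix x assume "x \<in> grid ms"
  show "rmap (spread_rep R :: 'a rep) x x = 1\<^sub>m (rdim (spread_rep R :: 'a rep) x)"
    by (cases "x \<in> R") (auto intro: mat_dim0)
next
  fix x y z assume xg: "x \<in> grid ms" and yg: "y \<in> grid ms" and zg: "z \<in> grid ms" and le: "le_pt x y \<and> le_pt y z"
  show "rmap (spread_rep R :: 'a rep) y z * rmap (spread_rep R) x y = rmap (spread_rep R) x z"
  proof (cases "x \<in> R \<and> z \<in> R")
    case True
    hence "y \<in> R" using assms yg le unfolding spread_def by blast
    thus ?thesis using True by simp
  next
    case False
    show ?thesis
    proof (cases "y \<in> R")
      case yR: False
      have "x \<notin> R \<or> z \<notin> R" using False by blast
      thus ?thesis using yR by (auto simp: mult_0dim rmap_sr)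
    next
      case True
      show ?thesis
      proof (cases "x \<in> R")
        case False thus ?thesis using True by (simp add: rmap_sr)
      next
        case xR: True
        hence "z \<notin> R" using \<open>\<not> (x \<in> R \<and> z \<in> R)\<close> by blast
        thus ?thesis using True xR by (simp add: rmap_sr)
      qed
    qed
  qed
qed

lemma hom_carrier: "is_hom ms V W f \<Longrightarrow> x \<in> grid ms \<Longrightarrow> f x \<in> carrier_mat (rdim W x) (rdim V x)"
  by (simp add: is_hom_def)

lemma hom_nat: "is_hom ms V W f \<Longrightarrow> x \<in> grid ms \<Longrightarrow> y \<in> grid ms \<Longrightarrow> le_pt x y \<Longrightarrow>
  f y * rmap V x y = rmap W x y * f x"
  by (simp add: is_hom_def)

lemma rep_carrier: "is_rep ms V \<Longrightarrow> x \<in> grid ms \<Longrightarrow> y \<in> grid ms \<Longrightarrow> le_pt x y \<Longrightarrow>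
  rmap V x y \<in> carrier_mat (rdim V y) (rdim V x)"
  by (simp add: is_rep_def)

lemma hom_comp: assumes U: "is_rep ms U" and V: "is_rep ms V" and W: "is_rep ms W"
  and f: "is_hom ms V W f" and g: "is_hom ms U V g"
  shows "is_hom ms U W (\<lambda>x. f x * g x)"
  unfolding is_hom_def
proof (intro conjI ballI impI)
  fix x assume x: "x \<in> grid ms"
  show "f x * g x \<in> carrier_mat (rdim W x) (rdim U x)"
    by (rule mult_carrier_mat[OF hom_carrier[OF f x] hom_carrier[OF g x]])
next
  fix x y assume x: "x \<in> grid ms" and y: "y \<in> grid ms" and le: "le_pt x y"
  note cf = hom_carrier[OF f] and cg = hom_carrier[OF g]
  have "f y * g y * rmap U x y = f y * (g y * rmap U x y)"
    by (rule assoc_mult_mat[OF cf[OF y] cg[OF y] rep_carrier[OF U x y le]])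
  also have "\<dots> = f y * (rmap V x y * g x)" using hom_nat[OF g x y le] by simp
  also have "\<dots> = (f y * rmap V x y) * g x"
    by (rule assoc_mult_mat[OF cf[OF y] rep_carrier[OF V x y le] cg[OF x], symmetric])
  also have "\<dots> = rmap W x y * f x * g x" using hom_nat[OF f x y le] by simp
  also have "\<dots> = rmap W x y * (f x * g x)"
    by (rule assoc_mult_mat[OF rep_carrier[OF W x y le] cf[OF x] cg[OF x]])
  finally show "f y * g y * rmap U x y = rmap W x y * (f x * g x)" .
qed

lemma hom_id: assumes V: "is_rep ms V" shows "is_hom ms V V (\<lambda>x. 1\<^sub>m (rdim V x))"
  unfolding is_hom_def
proof (intro conjI ballI impI)
  fix x y assume x: "x \<in> grid ms" and y: "y \<in> grid ms" and le: "le_pt x y"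
  have c: "rmap V x y \<in> carrier_mat (rdim V y) (rdim V x)" using rep_carrier[OF V x y le] .
  show "1\<^sub>m (rdim V y) * rmap V x y = rmap V x y * 1\<^sub>m (rdim V x)"
    using left_mult_one_mat[OF c] right_mult_one_mat[OF c] by simp
next
  fix x assume "x \<in> grid ms"
  show "1\<^sub>m (rdim V x) \<in> carrier_mat (rdim V x) (rdim V x)" by (rule one_carrier_mat)
qed

lemma hom_minus: assumes U: "is_rep ms U" and W: "is_rep ms W"
  and f: "is_hom ms U W f" and g: "is_hom ms U W g"
  shows "is_hom ms U W (\<lambda>x. f x - g x)"
  unfolding is_hom_def
proof (intro conjI ballI impI)
  fix x assume x: "x \<in> grid ms"
  show "f x - g x \<in> carrier_mat (rdim W x) (rdim U x)"
    by (rule minus_carrier_mat[OF hom_carrier[OF g x]])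
next
  fix x y assume x: "x \<in> grid ms" and y: "y \<in> grid ms" and le: "le_pt x y"
  note cf = hom_carrier[OF f] and cg = hom_carrier[OF g]
  have "(f y - g y) * rmap U x y = f y * rmap U x y - g y * rmap U x y"
    using cf[OF y] cg[OF y] rep_carrier[OF U x y le] by (rule minus_mult_distrib_mat)
  also have "\<dots> = rmap W x y * f x - rmap W x y * g x" using hom_nat[OF f x y le] hom_nat[OF g x y le] by simp
  also have "\<dots> = rmap W x y * (f x - g x)"
    using rep_carrier[OF W x y le] cf[OF x] cg[OF x] by (rule mult_minus_distrib_mat[symmetric])
  finally show "(f y - g y) * rmap U x y = rmap W x y * (f x - g x)" .
qed

lemma iso_id: fixes V :: "'a :: field rep" assumes V: "is_rep ms V" shows "is_iso ms V V (\<lambda>x. 1\<^sub>m (rdim V x))"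
proof -
  have "\<forall>x\<in>grid ms. (1\<^sub>m (rdim V x) :: 'a mat) * 1\<^sub>m (rdim V x) = 1\<^sub>m (rdim V x)"
    using right_mult_one_mat[OF one_carrier_mat] by blast
  thus ?thesis unfolding is_iso_def using hom_id[OF V] by blast
qed

lemma dsum2_zero_sr: "dsum2 (spread_rep R) zero_rep = (spread_rep R :: 'a :: field rep)"
proof -
  have "rmap (dsum2 (spread_rep R) zero_rep) = (rmap (spread_rep R :: 'a rep))"
  proof (intro ext)
    fix x y
    have c: "rmap (spread_rep R :: 'a rep) x y \<in> carrier_mat (ind R y) (ind R x)" by (rule rmap_sr_carrier)
    show "rmap (dsum2 (spread_rep R) zero_rep) x y = (rmap (spread_rep R :: 'a rep)) x y"
      unfolding dsum2_def zero_rep_def using c by (auto intro!: eq_matI)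
  qed
  moreover have "rdim (dsum2 (spread_rep R) zero_rep) = (rdim (spread_rep R :: 'a rep))"
    by (auto simp: dsum2_def zero_rep_def)
  ultimately show ?thesis by (intro rep.equality) (auto simp: dsum2_def spread_rep_def)
qed

lemma spreads_sum_single: "spreads_sum [R] = (spread_rep R :: 'a :: field rep)"
  by (simp add: spreads_sum_def dsum_list_def dsum2_zero_sr)

lemma in_C_sr: assumes "spread ms R" shows "in_C ms (spread_rep R :: 'a :: field rep)"
  unfolding in_C_def
proof (intro conjI exI)
  show "is_rep ms (spread_rep R :: 'a rep)" using is_rep_sr[OF assms] .
  show "\<forall>R'\<in>set [R]. spread ms R'" using assms by simp
  show "is_iso ms (spreads_sum [R]) (spread_rep R :: 'a rep) (\<lambda>x. 1\<^sub>m (rdim (spread_rep R :: 'a rep) x))"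
    unfolding spreads_sum_single using iso_id[OF is_rep_sr[OF assms]] .
qed

lemma noniso_sr: assumes "is_iso ms (spread_rep K :: 'a :: field rep) (spread_rep S) f" "K \<subseteq> grid ms" "S \<subseteq> grid ms"
  shows "K = S"
proof (rule ccontr)
  assume "K \<noteq> S"
  then obtain x where x: "x \<in> grid ms" "(x \<in> K \<and> x \<notin> S) \<or> (x \<in> S \<and> x \<notin> K)" using assms(2,3) by blast
  obtain g where g: "is_hom ms (spread_rep S) (spread_rep K :: 'a rep) g"
    "g x * f x = 1\<^sub>m (ind K x)" "f x * g x = 1\<^sub>m (ind S x)"
    using assms(1) x(1) unfolding is_iso_def by auto
  have cf: "f x \<in> carrier_mat (ind S x) (ind K x)" using assms(1) x(1) unfolding is_iso_def is_hom_def by simp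
  have cg: "g x \<in> carrier_mat (ind K x) (ind S x)" using hom_carrier[OF g(1) x(1)] by simp
  show False
  proof (cases "x \<in> K")
    case True
    hence "x \<notin> S" using x by blast
    hence "g x * f x = 0\<^sub>m 1 1" using cf cg True by (intro mult_0dim) auto
    hence "(1\<^sub>m 1 :: 'a mat) = 0\<^sub>m 1 1" using g(2) True by simp
    thus False using one_neq_zero11 by blast
  next
    case False
    hence "x \<in> S" using x by blast
    hence "f x * g x = 0\<^sub>m 1 1" using cf cg False by (intro mult_0dim) auto
    hence "(1\<^sub>m 1 :: 'a mat) = 0\<^sub>m 1 1" using g(3) \<open>x \<in> S\<close> by simp
    thus False using one_neq_zero11 by blast
  qed
qed

lemma in_rad_sr: assumes K: "spread ms K" and S: "spread ms S" and KS: "K \<noteq> S"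
  and f: "is_hom ms (spread_rep K) (spread_rep S :: 'a :: field rep) f"
  shows "in_rad ms (spread_rep K) (spread_rep S :: 'a rep) f"
  unfolding in_rad_def
proof (intro conjI)
  show "in_C ms (spread_rep K :: 'a rep)" using in_C_sr[OF K] .
  show "in_C ms (spread_rep S :: 'a rep)" using in_C_sr[OF S] .
  show "is_hom ms (spread_rep K) (spread_rep S :: 'a rep) f" using f .
  have Kg: "K \<subseteq> grid ms" using K unfolding spread_def by blast
  have Sg: "S \<subseteq> grid ms" using S unfolding spread_def by blast
  have ni: "\<And>g. \<not> is_iso ms (spread_rep K) (spread_rep S :: 'a rep) g"
    using noniso_sr[OF _ Kg Sg] KS by blast
  show "\<exists>Rs Ss \<alpha> \<beta>. (\<forall>R\<in>set Rs. spread ms R) \<and> (\<forall>S\<in>set Ss. spread ms S) \<and>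
        is_iso ms (spreads_sum Rs) (spread_rep K :: 'a rep) \<alpha> \<and> is_iso ms (spread_rep S) (spreads_sum Ss) \<beta> \<and>
        (\<forall>i<length Rs. \<forall>j<length Ss.
           \<not> is_iso ms (spread_rep (Rs ! i)) (spread_rep (Ss ! j))
               (component (map spread_rep Rs) (map spread_rep Ss) (hcomp \<beta> (hcomp f \<alpha>)) i j))"
    apply (rule exI[of _ "[K]"], rule exI[of _ "[S]"])
    apply (rule exI[of _ "\<lambda>x. 1\<^sub>m (rdim (spread_rep K :: 'a rep) x)"])
    apply (rule exI[of _ "\<lambda>x. 1\<^sub>m (rdim (spread_rep S :: 'a rep) x)"])
    using K S iso_id[OF is_rep_sr[OF K]] iso_id[OF is_rep_sr[OF S]] ni
    by (simp add: spreads_sum_single)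
qed

lemma sum_delta_nat: "(\<Sum>k\<in>{0..<(m::nat)}. (if i = k then 1 else 0) * f k) = (if i < m then f i else (0::'a::semiring_1))"
proof -
  have "(\<Sum>k\<in>{0..<m}. (if i = k then 1 else 0) * f k) = (\<Sum>k\<in>{0..<m}. if i = k then f k else 0)"
    by (rule sum.cong) auto
  also have "\<dots> = (if i \<in> {0..<m} then f i else 0)" by (subst sum.delta') auto
  finally show ?thesis by simp
qed

lemma sum_delta_nat': "(\<Sum>k\<in>{0..<(m::nat)}. f k * (if k = j then 1 else 0)) = (if j < m then f j else (0::'a::semiring_1))"
proof -
  have "(\<Sum>k\<in>{0..<m}. f k * (if k = j then 1 else 0)) = (\<Sum>k\<in>{0..<m}. if k = j then f k else 0)"
    by (rule sum.cong) auto
  also have "\<dots> = (if j \<in> {0..<m} then f j else 0)" by (subst sum.delta) auto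
  finally show ?thesis by simp
qed

definition dmat :: "nat \<Rightarrow> nat \<Rightarrow> 'a :: semiring_1 mat" where
  "dmat n m = mat n m (\<lambda>(i,j). if i = j then 1 else 0)"

lemma dmat_carrier[simp]: "dmat n m \<in> carrier_mat n m" by (simp add: dmat_def)
lemma dmat_dims[simp]: "dim_row (dmat n m) = n" "dim_col (dmat n m) = m" by (simp_all add: dmat_def)

lemma delta_mult_left: assumes B: "(B :: 'a :: semiring_1 mat) \<in> carrier_mat m c"
  shows "dmat n m * B = mat n c (\<lambda>(i,j). if i < m then B $$ (i,j) else 0)"
proof (rule eq_matI)
  fix i j assume i: "i < dim_row (mat n c (\<lambda>(i,j). if i < m then B $$ (i,j) else 0))"
    and j: "j < dim_col (mat n c (\<lambda>(i,j). if i < m then B $$ (i,j) else 0))"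
  hence i': "i < n" and j': "j < c" by auto
  have "(dmat n m * B) $$ (i,j) = (\<Sum>k\<in>{0..<m}. (if i = k then 1 else 0) * B $$ (k,j))"
    using B i' j' by (simp add: dmat_def scalar_prod_def)
  also have "\<dots> = (if i < m then B $$ (i,j) else 0)" by (rule sum_delta_nat)
  finally show "(dmat n m * B) $$ (i,j) = mat n c (\<lambda>(i,j). if i < m then B $$ (i,j) else 0) $$ (i,j)"
    using i' j' by simp
qed (use B in auto)

lemma delta_mult_right: assumes B: "(B :: 'a :: semiring_1 mat) \<in> carrier_mat r n"
  shows "B * dmat n m = mat r m (\<lambda>(i,j). if j < n then B $$ (i,j) else 0)"
proof (rule eq_matI)
  fix i j assume i: "i < dim_row (mat r m (\<lambda>(i,j). if j < n then B $$ (i,j) else 0))"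
    and j: "j < dim_col (mat r m (\<lambda>(i,j). if j < n then B $$ (i,j) else 0))"
  hence i': "i < r" and j': "j < m" by auto
  have "(B * dmat n m) $$ (i,j) = (\<Sum>k\<in>{0..<n}. B $$ (i,k) * (if k = j then 1 else 0))"
    using B i' j' by (simp add: dmat_def scalar_prod_def)
  also have "\<dots> = (if j < n then B $$ (i,j) else 0)" by (rule sum_delta_nat')
  finally show "(B * dmat n m) $$ (i,j) = mat r m (\<lambda>(i,j). if j < n then B $$ (i,j) else 0) $$ (i,j)"
    using i' j' by simp
qed (use B in auto)

lemma rdim_dsum2[simp]: "rdim (dsum2 V W) x = rdim V x + rdim W x"
  by (simp add: dsum2_def)

lemma rmap_dsum2: "rmap (dsum2 V W) x y = four_block_mat (rmap V x y) (0\<^sub>m (rdim V y) (rdim W x))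
                                  (0\<^sub>m (rdim W y) (rdim V x)) (rmap W x y)"
  by (simp add: dsum2_def)

lemma is_rep_dsum2: fixes V W :: "'a :: field rep"
  assumes V: "is_rep ms V" and W: "is_rep ms W" shows "is_rep ms (dsum2 V W)"
  unfolding is_rep_def
proof (intro conjI ballI impI)
  fix x y assume x: "x \<in> grid ms" and y: "y \<in> grid ms" and le: "le_pt x y"
  show "rmap (dsum2 V W) x y \<in> carrier_mat (rdim (dsum2 V W) y) (rdim (dsum2 V W) x)"
    unfolding rmap_dsum2 rdim_dsum2
    by (rule four_block_carrier_mat[OF rep_carrier[OF V x y le] rep_carrier[OF W x y le]])
next
  fix x assume x: "x \<in> grid ms"
  have "rmap V x x = 1\<^sub>m (rdim V x)" "rmap W x x = 1\<^sub>m (rdim W x)" using V W x by (auto simp: is_rep_def)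
  thus "rmap (dsum2 V W) x x = 1\<^sub>m (rdim (dsum2 V W) x)"
    unfolding rmap_dsum2 rdim_dsum2 by simp
next
  fix x y z assume x: "x \<in> grid ms" and y: "y \<in> grid ms" and z: "z \<in> grid ms" and le: "le_pt x y \<and> le_pt y z"
  note cV1 = rep_carrier[OF V y z] and cV2 = rep_carrier[OF V x y] and cW1 = rep_carrier[OF W y z] and cW2 = rep_carrier[OF W x y]
  have cVyz: "rmap V y z \<in> carrier_mat (rdim V z) (rdim V y)" using cV1 le by blast
  have cVxy: "rmap V x y \<in> carrier_mat (rdim V y) (rdim V x)" using cV2 le by blast
  have cWyz: "rmap W y z \<in> carrier_mat (rdim W z) (rdim W y)" using cW1 le by blast
  have cWxy: "rmap W x y \<in> carrier_mat (rdim W y) (rdim W x)" using cW2 le by blast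
  have cV: "rmap V y z * rmap V x y = rmap V x z" using V x y z le by (auto simp: is_rep_def)
  have cW: "rmap W y z * rmap W x y = rmap W x z" using W x y z le by (auto simp: is_rep_def)
  have cVxz: "rmap V x z \<in> carrier_mat (rdim V z) (rdim V x)" using mult_carrier_mat[OF cVyz cVxy] cV by simp
  have cWxz: "rmap W x z \<in> carrier_mat (rdim W z) (rdim W x)" using mult_carrier_mat[OF cWyz cWxy] cW by simp
  have "rmap (dsum2 V W) y z * rmap (dsum2 V W) x y =
    four_block_mat (rmap V y z * rmap V x y + 0\<^sub>m (rdim V z) (rdim W y) * 0\<^sub>m (rdim W y) (rdim V x))
                   (rmap V y z * 0\<^sub>m (rdim V y) (rdim W x) + 0\<^sub>m (rdim V z) (rdim W y) * rmap W x y)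
                   (0\<^sub>m (rdim W z) (rdim V y) * rmap V x y + rmap W y z * 0\<^sub>m (rdim W y) (rdim V x))
                   (0\<^sub>m (rdim W z) (rdim V y) * 0\<^sub>m (rdim V y) (rdim W x) + rmap W y z * rmap W x y)"
    unfolding rmap_dsum2
    by (rule mult_four_block_mat[OF cVyz zero_carrier_mat zero_carrier_mat cWyz cVxy zero_carrier_mat zero_carrier_mat cWxy])
  also have "\<dots> = four_block_mat (rmap V x z) (0\<^sub>m (rdim V z) (rdim W x)) (0\<^sub>m (rdim W z) (rdim V x)) (rmap W x z)"
    using cVyz cVxy cWyz cWxy cV cW cVxz cWxz by simp
  finally show "rmap (dsum2 V W) y z * rmap (dsum2 V W) x y = rmap (dsum2 V W) x z"
    unfolding rmap_dsum2 .
qed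

definition iota :: "'a :: field rep \<Rightarrow> 'a rep \<Rightarrow> nat list \<Rightarrow> 'a mat" where
  "iota V W x = dmat (rdim V x + rdim W x) (rdim V x)"

definition proj :: "'a :: field rep \<Rightarrow> 'a rep \<Rightarrow> nat list \<Rightarrow> 'a mat" where
  "proj V W x = dmat (rdim V x) (rdim V x + rdim W x)"

lemma iota_hom: fixes V W :: "'a :: field rep"
  assumes V: "is_rep ms V" and W: "is_rep ms W" shows "is_hom ms V (dsum2 V W) (iota V W)"
  unfolding is_hom_def
proof (intro conjI ballI impI)
  fix x assume "x \<in> grid ms"
  show "iota V W x \<in> carrier_mat (rdim (dsum2 V W) x) (rdim V x)" by (simp add: iota_def)
next
  fix x y assume x: "x \<in> grid ms" and y: "y \<in> grid ms" and le: "le_pt x y"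
  have cV: "rmap V x y \<in> carrier_mat (rdim V y) (rdim V x)" using rep_carrier[OF V x y le] .
  have cW: "rmap W x y \<in> carrier_mat (rdim W y) (rdim W x)" using rep_carrier[OF W x y le] .
  have cD: "rmap (dsum2 V W) x y \<in> carrier_mat (rdim V y + rdim W y) (rdim V x + rdim W x)"
    unfolding rmap_dsum2 using four_block_carrier_mat[OF cV cW] .
  have l: "iota V W y * rmap V x y = mat (rdim V y + rdim W y) (rdim V x) (\<lambda>(i,j). if i < rdim V y then rmap V x y $$ (i,j) else 0)"
    unfolding iota_def by (rule delta_mult_left[OF cV])
  have r: "rmap (dsum2 V W) x y * iota V W x = mat (rdim V y + rdim W y) (rdim V x) (\<lambda>(i,j). if j < rdim V x + rdim W x then rmap (dsum2 V W) x y $$ (i,j) else 0)"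
    unfolding iota_def by (rule delta_mult_right[OF cD])
  show "iota V W y * rmap V x y = rmap (dsum2 V W) x y * iota V W x"
    unfolding l r
  proof (rule eq_matI)
    fix i j assume i: "i < dim_row (mat (rdim V y + rdim W y) (rdim V x) (\<lambda>(i,j). if j < rdim V x + rdim W x then rmap (dsum2 V W) x y $$ (i,j) else 0))"
      and j: "j < dim_col (mat (rdim V y + rdim W y) (rdim V x) (\<lambda>(i,j). if j < rdim V x + rdim W x then rmap (dsum2 V W) x y $$ (i,j) else 0))"
    hence i': "i < rdim V y + rdim W y" and j': "j < rdim V x" by auto
    show "mat (rdim V y + rdim W y) (rdim V x) (\<lambda>(i,j). if i < rdim V y then rmap V x y $$ (i,j) else 0) $$ (i,j) =
      mat (rdim V y + rdim W y) (rdim V x) (\<lambda>(i,j). if j < rdim V x + rdim W x then rmap (dsum2 V W) x y $$ (i,j) else 0) $$ (i,j)"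
      using i' j' cV cW unfolding rmap_dsum2 by simp
  qed auto
qed

lemma proj_hom: fixes V W :: "'a :: field rep"
  assumes V: "is_rep ms V" and W: "is_rep ms W" shows "is_hom ms (dsum2 V W) V (proj V W)"
  unfolding is_hom_def
proof (intro conjI ballI impI)
  fix x assume "x \<in> grid ms"
  show "proj V W x \<in> carrier_mat (rdim V x) (rdim (dsum2 V W) x)" by (simp add: proj_def)
next
  fix x y assume x: "x \<in> grid ms" and y: "y \<in> grid ms" and le: "le_pt x y"
  have cV: "rmap V x y \<in> carrier_mat (rdim V y) (rdim V x)" using rep_carrier[OF V x y le] .
  have cW: "rmap W x y \<in> carrier_mat (rdim W y) (rdim W x)" using rep_carrier[OF W x y le] .
  have cD: "rmap (dsum2 V W) x y \<in> carrier_mat (rdim V y + rdim W y) (rdim V x + rdim W x)"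
    unfolding rmap_dsum2 using four_block_carrier_mat[OF cV cW] .
  have l: "proj V W y * rmap (dsum2 V W) x y = mat (rdim V y) (rdim V x + rdim W x) (\<lambda>(i,j). if i < rdim V y + rdim W y then rmap (dsum2 V W) x y $$ (i,j) else 0)"
    unfolding proj_def by (rule delta_mult_left[OF cD])
  have r: "rmap V x y * proj V W x = mat (rdim V y) (rdim V x + rdim W x) (\<lambda>(i,j). if j < rdim V x then rmap V x y $$ (i,j) else 0)"
    unfolding proj_def by (rule delta_mult_right[OF cV])
  show "proj V W y * rmap (dsum2 V W) x y = rmap V x y * proj V W x"
    unfolding l r
  proof (rule eq_matI)
    fix i j assume i: "i < dim_row (mat (rdim V y) (rdim V x + rdim W x) (\<lambda>(i,j). if j < rdim V x then rmap V x y $$ (i,j) else 0))"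
      and j: "j < dim_col (mat (rdim V y) (rdim V x + rdim W x) (\<lambda>(i,j). if j < rdim V x then rmap V x y $$ (i,j) else 0))"
    hence i': "i < rdim V y" and j': "j < rdim V x + rdim W x" by auto
    show "mat (rdim V y) (rdim V x + rdim W x) (\<lambda>(i,j). if i < rdim V y + rdim W y then rmap (dsum2 V W) x y $$ (i,j) else 0) $$ (i,j) =
      mat (rdim V y) (rdim V x + rdim W x) (\<lambda>(i,j). if j < rdim V x then rmap V x y $$ (i,j) else 0) $$ (i,j)"
      using i' j' cV cW unfolding rmap_dsum2 by simp
  qed auto
qed

lemma proj_iota: "proj V W x * iota V W x = 1\<^sub>m (rdim V x)"
proof -
  have "proj V W x * iota V W x = mat (rdim V x) (rdim V x) (\<lambda>(i,j). if i < rdim V x + rdim W x then iota V W x $$ (i,j) else 0)"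
    unfolding proj_def by (rule delta_mult_left) (simp add: iota_def)
  also have "\<dots> = 1\<^sub>m (rdim V x)" by (rule eq_matI) (auto simp: iota_def dmat_def)
  finally show ?thesis .
qed

lemma comp_eq: assumes "q \<in> ccomp X p" shows "ccomp X q = ccomp X p"
proof -
  have pq: "(p, q) \<in> (crel X)\<^sup>*" using assms by (simp add: ccomp_def)
  hence qp: "(q, p) \<in> (crel X)\<^sup>*" by (rule rtrancl_crel_sym)
  show ?thesis
  proof
    show "ccomp X q \<subseteq> ccomp X p" unfolding ccomp_def using pq by (auto intro: rtrancl_trans)
    show "ccomp X p \<subseteq> ccomp X q" unfolding ccomp_def using qp by (auto intro: rtrancl_trans)
  qed
qed

definition can :: "nat list set \<Rightarrow> nat list set \<Rightarrow> nat list \<Rightarrow> 'a :: field mat" where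
  "can R1 R2 x = (if x \<in> R1 \<and> x \<in> R2 then 1\<^sub>m 1 else 0\<^sub>m (ind R2 x) (ind R1 x))"

lemma can_carrier: "can R1 R2 x \<in> carrier_mat (ind R2 x) (ind R1 x)"
  by (simp add: can_def)

lemma can_hom:
  assumes c1: "\<And>x y. x \<in> grid ms \<Longrightarrow> y \<in> grid ms \<Longrightarrow> le_pt x y \<Longrightarrow> x \<in> R1 \<Longrightarrow> x \<in> R2 \<Longrightarrow> y \<in> R2 \<Longrightarrow> y \<in> R1"
    and c2: "\<And>x y. x \<in> grid ms \<Longrightarrow> y \<in> grid ms \<Longrightarrow> le_pt x y \<Longrightarrow> x \<in> R1 \<Longrightarrow> y \<in> R1 \<Longrightarrow> y \<in> R2 \<Longrightarrow> x \<in> R2"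
  shows "is_hom ms (spread_rep R1) (spread_rep R2 :: 'a :: field rep) (can R1 R2)"
  unfolding is_hom_def
proof (intro conjI ballI impI)
  fix x assume "x \<in> grid ms"
  show "can R1 R2 x \<in> carrier_mat (rdim (spread_rep R2 :: 'a rep) x) (rdim (spread_rep R1 :: 'a rep) x)"
    using can_carrier by simp
next
  fix x y assume x: "x \<in> grid ms" and y: "y \<in> grid ms" and le: "le_pt x y"
  have cl: "(can R1 R2 y :: 'a mat) * rmap (spread_rep R1) x y \<in> carrier_mat (ind R2 y) (ind R1 x)"
    using mult_carrier_mat[OF can_carrier rmap_sr_carrier] .
  have cr: "rmap (spread_rep R2) x y * (can R1 R2 x :: 'a mat) \<in> carrier_mat (ind R2 y) (ind R1 x)"
    using mult_carrier_mat[OF rmap_sr_carrier can_carrier] .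
  show "(can R1 R2 y :: 'a mat) * rmap (spread_rep R1) x y = rmap (spread_rep R2) x y * can R1 R2 x"
  proof (cases "x \<in> R1 \<and> y \<in> R2")
    case False
    hence "ind R2 y = 0 \<or> ind R1 x = 0" by auto
    thus ?thesis using cl cr by (intro mat_dim0) auto
  next
    case True
    show ?thesis
    proof (cases "x \<in> R2")
      case xR2: True
      hence "y \<in> R1" using c1 x y le True by blast
      thus ?thesis using True xR2 by (simp add: can_def)
    next
      case xR2: False
      hence "y \<notin> R1" using c2 x y le True by blast
      thus ?thesis using True xR2 by (simp add: can_def mult_0dim)
    qed
  qed
qed

lemma hom_sr_carrier: "is_hom ms (spread_rep R1) (spread_rep R2 :: 'a :: field rep) f \<Longrightarrow> x \<in> grid ms \<Longrightarrow>
  f x \<in> carrier_mat (ind R2 x) (ind R1 x)"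
  using hom_carrier by fastforce

lemma brick:
  fixes u w :: "nat list \<Rightarrow> 'a :: field mat"
  assumes R1: "spread ms R1" and R2: "spread ms R2" and neq: "R1 \<noteq> R2"
    and u: "is_hom ms (spread_rep R1) (spread_rep R2 :: 'a rep) u"
    and w: "is_hom ms (spread_rep R2) (spread_rep R1 :: 'a rep) w"
    and x0: "x0 \<in> grid ms"
  shows "w x0 * u x0 = 0\<^sub>m (ind R1 x0) (ind R1 x0)"
proof (rule ccontr)
  assume nz: "w x0 * u x0 \<noteq> 0\<^sub>m (ind R1 x0) (ind R1 x0)"
  have G1: "R1 \<subseteq> grid ms" and G2: "R2 \<subseteq> grid ms" using R1 R2 spread_grid by blast+
  have cu: "\<And>x. x \<in> grid ms \<Longrightarrow> u x \<in> carrier_mat (ind R2 x) (ind R1 x)" using hom_sr_carrier[OF u] .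
  have cw: "\<And>x. x \<in> grid ms \<Longrightarrow> w x \<in> carrier_mat (ind R1 x) (ind R2 x)" using hom_sr_carrier[OF w] .
  have ce: "\<And>x. x \<in> grid ms \<Longrightarrow> w x * u x \<in> carrier_mat (ind R1 x) (ind R1 x)"
    using mult_carrier_mat[OF cw cu] by blast
  have zero_out: "\<And>x. x \<in> grid ms \<Longrightarrow> x \<notin> R1 \<or> x \<notin> R2 \<Longrightarrow> w x * u x = 0\<^sub>m (ind R1 x) (ind R1 x)"
  proof -
    fix x assume xg: "x \<in> grid ms" and o: "x \<notin> R1 \<or> x \<notin> R2"
    show "w x * u x = 0\<^sub>m (ind R1 x) (ind R1 x)"
    proof (cases "x \<in> R1")
      case False thus ?thesis using ce[OF xg] by (intro mat_dim0) auto
    next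
      case True
      hence "x \<notin> R2" using o by blast
      thus ?thesis using cw[OF xg] cu[OF xg] True by (simp add: mult_0dim)
    qed
  qed
  have x0R1: "x0 \<in> R1" and x0R2: "x0 \<in> R2" using zero_out[OF x0] nz by blast+
  have ehom: "is_hom ms (spread_rep R1) (spread_rep R1 :: 'a rep) (\<lambda>x. w x * u x)"
    using hom_comp[OF is_rep_sr[OF R1] is_rep_sr[OF R2] is_rep_sr[OF R1] w u] .
  have enat: "\<And>x y. x \<in> R1 \<Longrightarrow> y \<in> R1 \<Longrightarrow> le_pt x y \<Longrightarrow> w y * u y = w x * u x"
  proof -
    fix x y assume x: "x \<in> R1" and y: "y \<in> R1" and le: "le_pt x y"
    have xg: "x \<in> grid ms" and yg: "y \<in> grid ms" using x y G1 by blast+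
    have "(w y * u y) * rmap (spread_rep R1 :: 'a rep) x y = rmap (spread_rep R1 :: 'a rep) x y * (w x * u x)"
      using hom_nat[OF ehom xg yg le] .
    thus "w y * u y = w x * u x" using x y carrier_matD[OF ce[OF xg]] carrier_matD[OF ce[OF yg]] by simp
  qed
  have econst: "\<And>x. x \<in> R1 \<Longrightarrow> w x * u x = w x0 * u x0"
  proof -
    fix x assume x: "x \<in> R1"
    have "(x0, x) \<in> (crel R1)\<^sup>*" using spread_conn[OF R1 x0R1 x] .
    thus "w x * u x = w x0 * u x0"
    proof (induction rule: rtrancl_induct)
      case base thus ?case by simp
    next
      case (step y z)
      have yz: "y \<in> R1" "z \<in> R1" "comparable y z" using step(2) by (auto simp: crel_def)
      show ?case
      proof (cases "le_pt y z")
        case True thus ?thesis using enat[OF yz(1,2) True] step(3) by simp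
      next
        case False hence "le_pt z y" using yz(3) by (simp add: comparable_def)
        thus ?thesis using enat[OF yz(2,1)] step(3) by simp
      qed
    qed
  qed
  have R12: "R1 \<subseteq> R2"
  proof
    fix x assume x: "x \<in> R1"
    show "x \<in> R2"
    proof (rule ccontr)
      assume "x \<notin> R2"
      hence "w x * u x = 0\<^sub>m (ind R1 x) (ind R1 x)" using zero_out x G1 by blast
      thus False using econst[OF x] nz x x0R1 by simp
    qed
  qed
  have nz1: "w x0 * u x0 \<noteq> 0\<^sub>m 1 1" using nz x0R1 by simp
  have R21: "R2 \<subseteq> R1"
  proof
    fix y assume y: "y \<in> R2"
    have "(x0, y) \<in> (crel R2)\<^sup>*" using spread_conn[OF R2 x0R2 y] .
    thus "y \<in> R1"
    proof (induction rule: rtrancl_induct)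
      case base thus ?case using x0R1 .
    next
      case (step y' z)
      have yz: "y' \<in> R2" "z \<in> R2" "comparable y' z" using step(2) by (auto simp: crel_def)
      have y'R1: "y' \<in> R1" using step(3) .
      have y'g: "y' \<in> grid ms" and zg: "z \<in> grid ms" using yz G2 by blast+
      have ey: "w y' * u y' \<noteq> 0\<^sub>m 1 1" using econst[OF y'R1] nz1 by simp
      show ?case
      proof (rule ccontr)
        assume zR1: "z \<notin> R1"
        show False
        proof (cases "le_pt y' z")
          case True
          have "u z * rmap (spread_rep R1 :: 'a rep) y' z = rmap (spread_rep R2 :: 'a rep) y' z * u y'"
            using hom_nat[OF u y'g zg True] .
          moreover have "u z * rmap (spread_rep R1 :: 'a rep) y' z = 0\<^sub>m 1 1"
            using carrier_matD[OF cu[OF zg]] zR1 yz y'R1 by simp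
          moreover have "rmap (spread_rep R2 :: 'a rep) y' z * u y' = u y'"
            using carrier_matD[OF cu[OF y'g]] yz y'R1 by simp
          ultimately have "u y' = 0\<^sub>m 1 1" by simp
          hence "w y' * u y' = 0\<^sub>m 1 1" using carrier_matD[OF cw[OF y'g]] yz y'R1 by simp
          thus False using ey by simp
        next
          case False hence le: "le_pt z y'" using yz(3) by (simp add: comparable_def)
          have "w y' * rmap (spread_rep R2 :: 'a rep) z y' = rmap (spread_rep R1 :: 'a rep) z y' * w z"
            using hom_nat[OF w zg y'g le] .
          moreover have "rmap (spread_rep R1 :: 'a rep) z y' * w z = 0\<^sub>m 1 1"
            using carrier_matD[OF cw[OF zg]] zR1 yz y'R1 by simp
          moreover have "w y' * rmap (spread_rep R2 :: 'a rep) z y' = w y'"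
            using carrier_matD[OF cw[OF y'g]] yz y'R1 by simp
          ultimately have "w y' = 0\<^sub>m 1 1" by simp
          hence "w y' * u y' = 0\<^sub>m 1 1" using carrier_matD[OF cu[OF y'g]] yz y'R1 by simp
          thus False using ey by simp
        qed
      qed
    qed
  qed
  show False using R12 R21 neq by blast
qed

context qctx begin

lemma part3:
  fixes C :: "'a :: field rep" and \<rho> :: "nat list \<Rightarrow> 'a mat" and R :: "nat list set"
  assumes appr: "min_spread_rad_approx ms (spread_rep S) C \<rho>" and R: "spread ms R"
    and ds: "direct_summand ms (spread_rep R) C"
  shows "fclosed ms S R"
proof (rule ccontr)
  assume nfc: "\<not> fclosed ms S R"
  have inC: "in_C ms C" and rho: "is_hom ms C (spread_rep S) \<rho>" and rm: "right_minimal ms C (spread_rep S) \<rho>"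
    using appr unfolding min_spread_rad_approx_def by blast+
  have AP: "\<And>A' g. in_C ms A' \<Longrightarrow> is_hom ms A' (spread_rep S) g \<Longrightarrow> in_rad ms A' (spread_rep S) g \<Longrightarrow>
      \<exists>h. is_hom ms A' C h \<and> (\<forall>x\<in>grid ms. \<rho> x * h x = g x)"
    using appr unfolding min_spread_rad_approx_def by blast
  have repC: "is_rep ms C" using inC unfolding in_C_def by blast
  have repR: "is_rep ms (spread_rep R :: 'a rep)" using is_rep_sr[OF R] .
  have repS: "is_rep ms (spread_rep S :: 'a rep)" using is_rep_sr[OF spS] .
  have Rg: "R \<subseteq> grid ms" using spread_grid[OF R] .
  have RS: "R \<noteq> S" using nfc S_fclosed by blast
  obtain X \<alpha> where repX: "is_rep ms X" and iso: "is_iso ms (dsum2 (spread_rep R) X) C \<alpha>"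
    using ds unfolding direct_summand_def by blast
  define D where "D = dsum2 (spread_rep R :: 'a rep) X"
  have repD: "is_rep ms D" unfolding D_def using is_rep_dsum2[OF repR repX] .
  have ahom: "is_hom ms D C \<alpha>" using iso unfolding is_iso_def D_def by blast
  obtain \<alpha>' where a'hom: "is_hom ms C D \<alpha>'" and inv1: "\<And>x. x \<in> grid ms \<Longrightarrow> \<alpha>' x * \<alpha> x = 1\<^sub>m (rdim D x)"
    using iso unfolding is_iso_def D_def by blast
  define \<iota> where "\<iota> = iota (spread_rep R :: 'a rep) X"
  define \<pi> where "\<pi> = proj (spread_rep R :: 'a rep) X"
  have ihom: "is_hom ms (spread_rep R) D \<iota>" unfolding \<iota>_def D_def using iota_hom[OF repR repX] .
  have phom: "is_hom ms D (spread_rep R) \<pi>" unfolding \<pi>_def D_def using proj_hom[OF repR repX] .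
  have pi1: "\<And>x. \<pi> x * \<iota> x = 1\<^sub>m (ind R x)" unfolding \<pi>_def \<iota>_def using proj_iota by (metis rdim_sr)
  define g where "g = (\<lambda>x. \<rho> x * (\<alpha> x * \<iota> x))"
  have aihom: "is_hom ms (spread_rep R) C (\<lambda>x. \<alpha> x * \<iota> x)" using hom_comp[OF repR repD repC ahom ihom] .
  have ghom: "is_hom ms (spread_rep R) (spread_rep S :: 'a rep) g"
    unfolding g_def using hom_comp[OF repR repC repS rho aihom] .
  have cg: "\<And>x. x \<in> grid ms \<Longrightarrow> g x \<in> carrier_mat (ind S x) (ind R x)" using hom_sr_carrier[OF ghom] .
  have gnat: "\<And>x y. x \<in> grid ms \<Longrightarrow> y \<in> grid ms \<Longrightarrow> le_pt x y \<Longrightarrow>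
      g y * rmap (spread_rep R :: 'a rep) x y = rmap (spread_rep S :: 'a rep) x y * g x"
    using hom_nat[OF ghom] .
  have g_tau_zero: "\<And>x. x \<in> grid ms \<Longrightarrow> tau x \<notin> R \<Longrightarrow> g x = 0\<^sub>m (ind S x) (ind R x)"
  proof -
    fix x assume xg: "x \<in> grid ms" and t: "tau x \<notin> R"
    show "g x = 0\<^sub>m (ind S x) (ind R x)"
    proof (cases "x \<in> R \<and> x \<in> S")
      case False thus ?thesis using cg[OF xg] by (intro mat_dim0) auto
    next
      case True
      have tg: "tau x \<in> grid ms" using tau_grid[OF xg] .
      have tS: "tau x \<in> S" using S_sat[OF xg] True by blast
      have "g (tau x) * rmap (spread_rep R :: 'a rep) x (tau x) = rmap (spread_rep S :: 'a rep) x (tau x) * g x"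
        using gnat[OF xg tg le_tau[OF xg]] .
      moreover have "g (tau x) * rmap (spread_rep R :: 'a rep) x (tau x) = 0\<^sub>m 1 1"
        using carrier_matD[OF cg[OF tg]] t tS True by simp
      moreover have "rmap (spread_rep S :: 'a rep) x (tau x) * g x = g x"
        using carrier_matD[OF cg[OF xg]] tS True by simp
      ultimately show ?thesis using True by simp
    qed
  qed
  have g_tau_eq: "\<And>x y. x \<in> grid ms \<Longrightarrow> y \<in> grid ms \<Longrightarrow> le_pt x y \<Longrightarrow> x \<in> R \<Longrightarrow> x \<in> S \<Longrightarrow> y \<in> R \<Longrightarrow> y \<in> S \<Longrightarrow> g y = g x"
  proof -
    fix x y assume xg: "x \<in> grid ms" and yg: "y \<in> grid ms" and le: "le_pt x y" and m: "x \<in> R" "x \<in> S" "y \<in> R" "y \<in> S"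
    have "g y * rmap (spread_rep R :: 'a rep) x y = rmap (spread_rep S :: 'a rep) x y * g x" using gnat[OF xg yg le] .
    thus "g y = g x" using carrier_matD[OF cg[OF xg]] carrier_matD[OF cg[OF yg]] m by simp
  qed
  define Kof where "Kof x = ccomp (Rt R) x" for x
  define vK :: "nat list set \<Rightarrow> nat list \<Rightarrow> 'a mat" where
    "vK K x = (if x \<in> K \<and> x \<in> S then g (tau x) else 0\<^sub>m (ind S x) (ind K x))" for K x
  define uK :: "nat list set \<Rightarrow> nat list \<Rightarrow> 'a mat" where "uK K = can R K" for K
  have Kfacts: "\<And>p. p \<in> Rt R \<Longrightarrow> spread ms (Kof p) \<and> Kof p \<noteq> S \<and> Kof p \<noteq> R \<and> Kof p \<subseteq> Rt R"
  proof -
    fix p assume p: "p \<in> Rt R"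
    have "spread ms (Kof p)" unfolding Kof_def using K_spread[OF R p] .
    moreover have "Kof p \<noteq> S" unfolding Kof_def using K_ne_S[OF R RS p] .
    moreover have "Kof p \<noteq> R" unfolding Kof_def using K_fclosed[OF R p] nfc by metis
    moreover have "Kof p \<subseteq> Rt R" unfolding Kof_def using K_sub[OF p] .
    ultimately show "spread ms (Kof p) \<and> Kof p \<noteq> S \<and> Kof p \<noteq> R \<and> Kof p \<subseteq> Rt R" by blast
  qed
  have uhom: "\<And>p. p \<in> Rt R \<Longrightarrow> is_hom ms (spread_rep R) (spread_rep (Kof p) :: 'a rep) (uK (Kof p))"
  proof -
    fix p assume p: "p \<in> Rt R"
    show "is_hom ms (spread_rep R) (spread_rep (Kof p) :: 'a rep) (uK (Kof p))"
      unfolding uK_def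
    proof (rule can_hom)
      fix x y assume "x \<in> grid ms" "y \<in> grid ms" "le_pt x y" "x \<in> R" "x \<in> Kof p" "y \<in> Kof p"
      thus "y \<in> R" using unit_up[OF R p] unfolding Kof_def by blast
    next
      fix x y assume "x \<in> grid ms" "y \<in> grid ms" "le_pt x y" "x \<in> R" "y \<in> R" "y \<in> Kof p"
      thus "x \<in> Kof p" using unit_down[OF R p] unfolding Kof_def by blast
    qed
  qed
  have cv: "\<And>K x. K \<subseteq> Rt R \<Longrightarrow> x \<in> grid ms \<Longrightarrow> vK K x \<in> carrier_mat (ind S x) (ind K x)"
  proof -
    fix K x assume KR: "K \<subseteq> Rt R" and xg: "x \<in> grid ms"
    show "vK K x \<in> carrier_mat (ind S x) (ind K x)"
    proof (cases "x \<in> K \<and> x \<in> S")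
      case True
      have "tau x \<in> R" using True KR by (auto simp: Rt_def)
      moreover have "tau x \<in> S" using True S_sat[OF xg] by blast
      ultimately show ?thesis using True cg[OF tau_grid[OF xg]] by (simp add: vK_def)
    next
      case False thus ?thesis by (auto simp: vK_def)
    qed
  qed
  have vhom: "\<And>p. p \<in> Rt R \<Longrightarrow> is_hom ms (spread_rep (Kof p)) (spread_rep S :: 'a rep) (vK (Kof p))"
  proof -
    fix p assume p: "p \<in> Rt R"
    let ?K = "Kof p"
    have KR: "?K \<subseteq> Rt R" using Kfacts[OF p] by blast
    show "is_hom ms (spread_rep ?K) (spread_rep S :: 'a rep) (vK ?K)"
      unfolding is_hom_def
    proof (intro conjI ballI impI)
      fix x assume xg: "x \<in> grid ms"
      show "vK ?K x \<in> carrier_mat (rdim (spread_rep S :: 'a rep) x) (rdim (spread_rep ?K :: 'a rep) x)"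
        using cv[OF KR xg] by simp
    next
      fix x y assume xg: "x \<in> grid ms" and yg: "y \<in> grid ms" and le: "le_pt x y"
      have cl: "vK ?K y * rmap (spread_rep ?K :: 'a rep) x y \<in> carrier_mat (ind S y) (ind ?K x)"
        using mult_carrier_mat[OF cv[OF KR yg] rmap_sr_carrier] .
      have cr: "rmap (spread_rep S :: 'a rep) x y * vK ?K x \<in> carrier_mat (ind S y) (ind ?K x)"
        using mult_carrier_mat[OF rmap_sr_carrier cv[OF KR xg]] .
      have txg: "tau x \<in> grid ms" and tyg: "tau y \<in> grid ms" using tau_grid xg yg by blast+
      have tle: "le_pt (tau x) (tau y)" using tau_mono[OF xg yg le] .
      show "vK ?K y * rmap (spread_rep ?K :: 'a rep) x y = rmap (spread_rep S :: 'a rep) x y * vK ?K x"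
      proof (cases "x \<in> ?K \<and> y \<in> S")
        case False
        hence "ind S y = 0 \<or> ind ?K x = 0" by auto
        thus ?thesis using cl cr by (intro mat_dim0) auto
      next
        case True
        have xRt: "x \<in> Rt R" using True KR by blast
        hence txR: "tau x \<in> R" by (simp add: Rt_def)
        have tyS: "tau y \<in> S" using True S_sat[OF yg] by blast
        have cgtx: "g (tau x) \<in> carrier_mat (ind S (tau x)) (ind R (tau x))" using cg[OF txg] .
        have cgty: "g (tau y) \<in> carrier_mat (ind S (tau y)) (ind R (tau y))" using cg[OF tyg] .
        have gn: "g (tau y) * rmap (spread_rep R :: 'a rep) (tau x) (tau y) = rmap (spread_rep S :: 'a rep) (tau x) (tau y) * g (tau x)"
          using gnat[OF txg tyg tle] .
        show ?thesis
        proof (cases "y \<in> ?K")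
          case yK: True
          have tyR: "tau y \<in> R" using yK KR by (auto simp: Rt_def)
          show ?thesis
          proof (cases "x \<in> S")
            case xS: True
            have txS: "tau x \<in> S" using xS S_sat[OF xg] by blast
            have "g (tau y) = g (tau x)" using gn carrier_matD[OF cgtx] carrier_matD[OF cgty] txR tyR txS tyS by simp
            thus ?thesis using True yK xS carrier_matD[OF cgtx] txR txS by (simp add: vK_def)
          next
            case xS: False
            have txS: "tau x \<notin> S" using xS S_sat[OF xg] by blast
            have "g (tau y) = 0\<^sub>m 1 1" using gn carrier_matD[OF cgtx] carrier_matD[OF cgty] txR tyR txS tyS by simp
            thus ?thesis using True yK xS carrier_matD[OF cgty] tyR tyS by (simp add: vK_def)
          qed
        next
          case yK: False
          have yRt: "y \<notin> Rt R"
          proof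
            assume "y \<in> Rt R"
            hence "y \<in> ?K" using comp_closed[of x "Rt R" p y] True xRt le_comparable[OF le] unfolding Kof_def by blast
            thus False using yK by simp
          qed
          hence tyR: "tau y \<notin> R" using yg by (simp add: Rt_def)
          show ?thesis
          proof (cases "x \<in> S")
            case xS: True
            have txS: "tau x \<in> S" using xS S_sat[OF xg] by blast
            have "g (tau x) = 0\<^sub>m 1 1" using gn carrier_matD[OF cgtx] carrier_matD[OF cgty] txR tyR txS tyS by simp
            thus ?thesis using True yK xS by (simp add: vK_def)
          next
            case xS: False
            thus ?thesis using True yK by (simp add: vK_def)
          qed
        qed
      qed
    qed
  qed
  have vu: "\<And>p x. p \<in> Rt R \<Longrightarrow> x \<in> grid ms \<Longrightarrow> x \<in> Kof p \<Longrightarrow> vK (Kof p) x * uK (Kof p) x = g x"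
  proof -
    fix p x assume p: "p \<in> Rt R" and xg: "x \<in> grid ms" and xK: "x \<in> Kof p"
    have KR: "Kof p \<subseteq> Rt R" using Kfacts[OF p] by blast
    have cl: "vK (Kof p) x * uK (Kof p) x \<in> carrier_mat (ind S x) (ind R x)"
      using mult_carrier_mat[OF cv[OF KR xg] can_carrier] unfolding uK_def .
    show "vK (Kof p) x * uK (Kof p) x = g x"
    proof (cases "x \<in> R \<and> x \<in> S")
      case False
      hence "ind S x = 0 \<or> ind R x = 0" by auto
      thus ?thesis using cl cg[OF xg] by (intro mat_dim0) auto
    next
      case True
      have txR: "tau x \<in> R" using xK KR by (auto simp: Rt_def)
      have txS: "tau x \<in> S" using True S_sat[OF xg] by blast
      have "g (tau x) = g x" using g_tau_eq[OF xg tau_grid[OF xg] le_tau[OF xg]] True txR txS by blast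
      moreover have "g (tau x) * 1\<^sub>m 1 = g (tau x)" using carrier_matD[OF cg[OF tau_grid[OF xg]]] txR txS by simp
      ultimately show ?thesis using True xK by (simp add: vK_def uK_def can_def)
    qed
  qed
  have h0ex: "\<And>p. p \<in> Rt R \<Longrightarrow> \<exists>h. is_hom ms (spread_rep (Kof p)) C h \<and> (\<forall>x\<in>grid ms. \<rho> x * h x = vK (Kof p) x)"
  proof -
    fix p assume p: "p \<in> Rt R"
    have Ks: "spread ms (Kof p)" and KS: "Kof p \<noteq> S" using Kfacts[OF p] by blast+
    show "\<exists>h. is_hom ms (spread_rep (Kof p)) C h \<and> (\<forall>x\<in>grid ms. \<rho> x * h x = vK (Kof p) x)"
      using AP[OF in_C_sr[OF Ks] vhom[OF p] in_rad_sr[OF Ks spS KS vhom[OF p]]] .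
  qed
  define h0 :: "nat list set \<Rightarrow> nat list \<Rightarrow> 'a mat" where
    "h0 K = (SOME h. is_hom ms (spread_rep K) C h \<and> (\<forall>x\<in>grid ms. \<rho> x * h x = vK K x))" for K
  have h0p: "\<And>p. p \<in> Rt R \<Longrightarrow> is_hom ms (spread_rep (Kof p)) C (h0 (Kof p)) \<and> (\<forall>x\<in>grid ms. \<rho> x * h0 (Kof p) x = vK (Kof p) x)"
    unfolding h0_def using h0ex by (rule someI_ex)
  define H where "H K x = h0 K x * uK K x" for K x
  have Hhom: "\<And>p. p \<in> Rt R \<Longrightarrow> is_hom ms (spread_rep R) C (H (Kof p))"
  proof -
    fix p assume p: "p \<in> Rt R"
    have Ks: "spread ms (Kof p)" using Kfacts[OF p] by blast
    show "is_hom ms (spread_rep R) C (H (Kof p))"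
      unfolding H_def using hom_comp[OF repR is_rep_sr[OF Ks] repC conjunct1[OF h0p[OF p]] uhom[OF p]] .
  qed
  have Hzero: "\<And>p x. p \<in> Rt R \<Longrightarrow> x \<in> grid ms \<Longrightarrow> x \<notin> Kof p \<Longrightarrow> H (Kof p) x = 0\<^sub>m (rdim C x) (ind R x)"
  proof -
    fix p x assume p: "p \<in> Rt R" and xg: "x \<in> grid ms" and xK: "x \<notin> Kof p"
    have c1: "h0 (Kof p) x \<in> carrier_mat (rdim C x) 0"
      using hom_carrier[OF conjunct1[OF h0p[OF p]] xg] xK by simp
    have c2: "uK (Kof p) x \<in> carrier_mat 0 (ind R x)" using can_carrier[of R "Kof p" x] xK unfolding uK_def by simp
    show "H (Kof p) x = 0\<^sub>m (rdim C x) (ind R x)" unfolding H_def using mult_0dim[OF c1 c2] .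
  qed
  define h where "h x = (if x \<in> Rt R then H (Kof x) x else 0\<^sub>m (rdim C x) (ind R x))" for x
  have h_eq: "\<And>p x. p \<in> Rt R \<Longrightarrow> x \<in> grid ms \<Longrightarrow> (x \<in> Rt R \<Longrightarrow> x \<in> Kof p) \<Longrightarrow> h x = H (Kof p) x"
  proof -
    fix p x assume p: "p \<in> Rt R" and xg: "x \<in> grid ms" and c: "x \<in> Rt R \<Longrightarrow> x \<in> Kof p"
    show "h x = H (Kof p) x"
    proof (cases "x \<in> Rt R")
      case True
      hence "Kof x = Kof p" using c comp_eq unfolding Kof_def by blast
      thus ?thesis using True by (simp add: h_def)
    next
      case False
      hence "x \<notin> Kof p" using Kfacts[OF p] by blast
      thus ?thesis using False Hzero[OF p xg] by (simp add: h_def)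
    qed
  qed
  have hhom: "is_hom ms (spread_rep R) C h"
    unfolding is_hom_def
  proof (intro conjI ballI impI)
    fix x assume xg: "x \<in> grid ms"
    show "h x \<in> carrier_mat (rdim C x) (rdim (spread_rep R :: 'a rep) x)"
    proof (cases "x \<in> Rt R")
      case True
      thus ?thesis using hom_carrier[OF Hhom[OF True] xg] by (simp add: h_def)
    next
      case False thus ?thesis by (simp add: h_def)
    qed
  next
    fix x y assume xg: "x \<in> grid ms" and yg: "y \<in> grid ms" and le: "le_pt x y"
    show "h y * rmap (spread_rep R) x y = rmap C x y * h x"
    proof (cases "x \<in> Rt R")
      case True
      have yc: "y \<in> Rt R \<Longrightarrow> y \<in> Kof x"
        using comp_closed[of x "Rt R" x y] comp_self True le_comparable[OF le] unfolding Kof_def by blast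
      have "h x = H (Kof x) x" using h_eq[OF True xg] comp_self unfolding Kof_def by blast
      moreover have "h y = H (Kof x) y" using h_eq[OF True yg yc] .
      ultimately show ?thesis using hom_nat[OF Hhom[OF True] xg yg le] by simp
    next
      case xRt: False
      show ?thesis
      proof (cases "y \<in> Rt R")
        case True
        have "h y = H (Kof y) y" using h_eq[OF True yg] comp_self unfolding Kof_def by blast
        moreover have "h x = H (Kof y) x" using h_eq[OF True xg] xRt by blast
        ultimately show ?thesis using hom_nat[OF Hhom[OF True] xg yg le] by simp
      next
        case False
        have cRxy: "rmap (spread_rep R :: 'a rep) x y \<in> carrier_mat (ind R y) (ind R x)" using rmap_sr_carrier .
        have cCxy: "rmap C x y \<in> carrier_mat (rdim C y) (rdim C x)" using rep_carrier[OF repC xg yg le] .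
        show ?thesis using xRt False left_mult_zero_mat[OF cRxy] right_mult_zero_mat[OF cCxy] by (simp add: h_def)
      qed
    qed
  qed
  have hfac: "\<And>x. x \<in> grid ms \<Longrightarrow> \<rho> x * h x = g x"
  proof -
    fix x assume xg: "x \<in> grid ms"
    show "\<rho> x * h x = g x"
    proof (cases "x \<in> Rt R")
      case True
      have xK: "x \<in> Kof x" unfolding Kof_def by (rule comp_self)
      have c1: "\<rho> x \<in> carrier_mat (ind S x) (rdim C x)" using hom_carrier[OF rho xg] by simp
      have c2: "h0 (Kof x) x \<in> carrier_mat (rdim C x) (ind (Kof x) x)" using hom_carrier[OF conjunct1[OF h0p[OF True]] xg] by simp
      have c3: "uK (Kof x) x \<in> carrier_mat (ind (Kof x) x) (ind R x)" using can_carrier unfolding uK_def .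
      have "\<rho> x * h x = \<rho> x * (h0 (Kof x) x * uK (Kof x) x)" using True by (simp add: h_def H_def)
      also have "\<dots> = (\<rho> x * h0 (Kof x) x) * uK (Kof x) x" using assoc_mult_mat[OF c1 c2 c3] by simp
      also have "\<dots> = vK (Kof x) x * uK (Kof x) x" using conjunct2[OF h0p[OF True]] xg by simp
      also have "\<dots> = g x" using vu[OF True xg xK] .
      finally show ?thesis .
    next
      case False
      have tR: "tau x \<notin> R" using False xg by (simp add: Rt_def)
      have c1: "\<rho> x \<in> carrier_mat (ind S x) (rdim C x)" using hom_carrier[OF rho xg] by simp
      have "\<rho> x * h x = 0\<^sub>m (ind S x) (ind R x)" using False right_mult_zero_mat[OF c1] by (simp add: h_def)
      thus ?thesis using g_tau_zero[OF xg tR] by simp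
    qed
  qed
  define \<theta> where "\<theta> x = \<pi> x * \<alpha>' x" for x
  define \<epsilon> where "\<epsilon> x = \<alpha> x * \<iota> x - h x" for x
  define \<phi> where "\<phi> x = 1\<^sub>m (rdim C x) - \<epsilon> x * \<theta> x" for x
  have thom: "is_hom ms C (spread_rep R) \<theta>" unfolding \<theta>_def using hom_comp[OF repC repD repR phom a'hom] .
  have ehom: "is_hom ms (spread_rep R) C \<epsilon>" unfolding \<epsilon>_def using hom_minus[OF repR repC aihom hhom] .
  have etom: "is_hom ms C C (\<lambda>x. \<epsilon> x * \<theta> x)" using hom_comp[OF repC repR repC ehom thom] .
  have fhom: "is_hom ms C C \<phi>" unfolding \<phi>_def using hom_minus[OF repC repC hom_id[OF repC] etom] .
  have ct: "\<And>x. x \<in> grid ms \<Longrightarrow> \<theta> x \<in> carrier_mat (ind R x) (rdim C x)" using hom_carrier[OF thom] by simp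
  have ce: "\<And>x. x \<in> grid ms \<Longrightarrow> \<epsilon> x \<in> carrier_mat (rdim C x) (ind R x)" using hom_carrier[OF ehom] by simp
  have cai: "\<And>x. x \<in> grid ms \<Longrightarrow> \<alpha> x * \<iota> x \<in> carrier_mat (rdim C x) (ind R x)" using hom_carrier[OF aihom] by simp
  have ch: "\<And>x. x \<in> grid ms \<Longrightarrow> h x \<in> carrier_mat (rdim C x) (ind R x)" using hom_carrier[OF hhom] by simp
  have crho: "\<And>x. x \<in> grid ms \<Longrightarrow> \<rho> x \<in> carrier_mat (ind S x) (rdim C x)" using hom_carrier[OF rho] by simp
  have rf: "\<forall>x\<in>grid ms. \<rho> x * \<phi> x = \<rho> x"
  proof
    fix x assume xg: "x \<in> grid ms"
    have cet: "\<epsilon> x * \<theta> x \<in> carrier_mat (rdim C x) (rdim C x)" using mult_carrier_mat[OF ce[OF xg] ct[OF xg]] .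
    have "\<rho> x * \<epsilon> x = \<rho> x * (\<alpha> x * \<iota> x) - \<rho> x * h x"
      unfolding \<epsilon>_def by (rule mult_minus_distrib_mat[OF crho[OF xg] cai[OF xg] ch[OF xg]])
    also have "\<dots> = g x - g x" using hfac[OF xg] by (simp add: g_def)
    also have "\<dots> = 0\<^sub>m (ind S x) (ind R x)" using cg[OF xg] by simp
    finally have re0: "\<rho> x * \<epsilon> x = 0\<^sub>m (ind S x) (ind R x)" .
    have "\<rho> x * \<phi> x = \<rho> x * 1\<^sub>m (rdim C x) - \<rho> x * (\<epsilon> x * \<theta> x)"
      unfolding \<phi>_def by (rule mult_minus_distrib_mat[OF crho[OF xg] one_carrier_mat cet])
    also have "\<rho> x * (\<epsilon> x * \<theta> x) = (\<rho> x * \<epsilon> x) * \<theta> x"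
      using assoc_mult_mat[OF crho[OF xg] ce[OF xg] ct[OF xg]] by simp
    also have "\<dots> = 0\<^sub>m (ind S x) (rdim C x)" using re0 left_mult_zero_mat[OF ct[OF xg]] by simp
    also have "\<rho> x * 1\<^sub>m (rdim C x) = \<rho> x" using right_mult_one_mat[OF crho[OF xg]] .
    also have "\<rho> x - 0\<^sub>m (ind S x) (rdim C x) = \<rho> x" using crho[OF xg] by (intro eq_matI) auto
    finally show "\<rho> x * \<phi> x = \<rho> x" .
  qed
  have "is_iso ms C C \<phi>" using rm fhom rf unfolding right_minimal_def by blast
  then obtain \<phi>' where f'hom: "is_hom ms C C \<phi>'" and finv: "\<And>x. x \<in> grid ms \<Longrightarrow> \<phi> x * \<phi>' x = 1\<^sub>m (rdim C x)"
    unfolding is_iso_def by blast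
  obtain x0 where x0R: "x0 \<in> R" using R unfolding spread_def by blast
  have x0g: "x0 \<in> grid ms" using x0R Rg by blast
  define n where "n = rdim C x0"
  define d where "d = rdim D x0"
  have ca: "\<alpha> x0 \<in> carrier_mat n d" using hom_carrier[OF ahom x0g] unfolding n_def d_def .
  have ca': "\<alpha>' x0 \<in> carrier_mat d n" using hom_carrier[OF a'hom x0g] unfolding n_def d_def .
  have ci: "\<iota> x0 \<in> carrier_mat d 1" using hom_carrier[OF ihom x0g] x0R unfolding d_def by simp
  have cp: "\<pi> x0 \<in> carrier_mat 1 d" using hom_carrier[OF phom x0g] x0R unfolding d_def by simp
  have ct0: "\<theta> x0 \<in> carrier_mat 1 n" using ct[OF x0g] x0R unfolding n_def by simp
  have ch0: "h x0 \<in> carrier_mat n 1" using ch[OF x0g] x0R unfolding n_def by simp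
  have cai0: "\<alpha> x0 * \<iota> x0 \<in> carrier_mat n 1" using mult_carrier_mat[OF ca ci] .
  have ce0: "\<epsilon> x0 \<in> carrier_mat n 1" using ce[OF x0g] x0R unfolding n_def by simp
  have cf0: "\<phi> x0 \<in> carrier_mat n n" using hom_carrier[OF fhom x0g] unfolding n_def by simp
  have cf'0: "\<phi>' x0 \<in> carrier_mat n n" using hom_carrier[OF f'hom x0g] unfolding n_def by simp
  have E0: "\<theta> x0 * h x0 = 0\<^sub>m 1 1"
  proof (cases "x0 \<in> Rt R")
    case True
    let ?K = "Kof x0"
    have Ks: "spread ms ?K" and KR: "?K \<noteq> R" using Kfacts[OF True] by blast+
    have h0h: "is_hom ms (spread_rep ?K) C (h0 ?K)" using conjunct1[OF h0p[OF True]] .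
    have whom: "is_hom ms (spread_rep ?K) (spread_rep R) (\<lambda>x. \<theta> x * h0 ?K x)"
      using hom_comp[OF is_rep_sr[OF Ks] repC repR thom h0h] .
    have br: "\<theta> x0 * h0 ?K x0 * uK ?K x0 = 0\<^sub>m (ind R x0) (ind R x0)"
      using brick[OF R Ks KR[symmetric] uhom[OF True] whom x0g] .
    have c2: "h0 ?K x0 \<in> carrier_mat n (ind ?K x0)" using hom_carrier[OF h0h x0g] unfolding n_def by simp
    have c3: "uK ?K x0 \<in> carrier_mat (ind ?K x0) (ind R x0)" using can_carrier unfolding uK_def .
    have "h x0 = h0 ?K x0 * uK ?K x0" using True by (simp add: h_def H_def)
    hence "\<theta> x0 * h x0 = \<theta> x0 * h0 ?K x0 * uK ?K x0" using assoc_mult_mat[OF ct0 c2 c3] by simp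
    thus ?thesis using br x0R by simp
  next
    case False
    hence "h x0 = 0\<^sub>m n 1" using x0R by (simp add: h_def n_def)
    thus ?thesis using right_mult_zero_mat[OF ct0] by simp
  qed
  have s1: "\<theta> x0 * (\<alpha> x0 * \<iota> x0) = 1\<^sub>m 1"
  proof -
    have "\<theta> x0 * (\<alpha> x0 * \<iota> x0) = \<pi> x0 * (\<alpha>' x0 * (\<alpha> x0 * \<iota> x0))"
      unfolding \<theta>_def using assoc_mult_mat[OF cp ca' cai0] .
    also have "\<alpha>' x0 * (\<alpha> x0 * \<iota> x0) = (\<alpha>' x0 * \<alpha> x0) * \<iota> x0" using assoc_mult_mat[OF ca' ca ci] by simp
    also have "\<dots> = 1\<^sub>m d * \<iota> x0" using inv1[OF x0g] unfolding d_def by simp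
    also have "\<dots> = \<iota> x0" using left_mult_one_mat[OF ci] .
    also have "\<pi> x0 * \<iota> x0 = 1\<^sub>m 1" using pi1[of x0] x0R by simp
    finally show ?thesis .
  qed
  have s2: "\<theta> x0 * \<epsilon> x0 = 1\<^sub>m 1"
  proof -
    have "\<theta> x0 * \<epsilon> x0 = \<theta> x0 * (\<alpha> x0 * \<iota> x0) - \<theta> x0 * h x0"
      unfolding \<epsilon>_def by (rule mult_minus_distrib_mat[OF ct0 cai0 ch0])
    also have "\<dots> = 1\<^sub>m 1 - 0\<^sub>m 1 1" using s1 E0 by simp
    also have "\<dots> = 1\<^sub>m 1" by (intro eq_matI) auto
    finally show ?thesis .
  qed
  have s3: "\<theta> x0 * \<phi> x0 = 0\<^sub>m 1 n"
  proof -
    have cet0: "\<epsilon> x0 * \<theta> x0 \<in> carrier_mat n n" using mult_carrier_mat[OF ce0 ct0] .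
    have "\<theta> x0 * \<phi> x0 = \<theta> x0 * 1\<^sub>m n - \<theta> x0 * (\<epsilon> x0 * \<theta> x0)"
      unfolding \<phi>_def n_def[symmetric] by (rule mult_minus_distrib_mat[OF ct0 one_carrier_mat cet0])
    also have "\<theta> x0 * (\<epsilon> x0 * \<theta> x0) = (\<theta> x0 * \<epsilon> x0) * \<theta> x0" using assoc_mult_mat[OF ct0 ce0 ct0] by simp
    also have "\<dots> = \<theta> x0" using s2 left_mult_one_mat[OF ct0] by simp
    also have "\<theta> x0 * 1\<^sub>m n = \<theta> x0" using right_mult_one_mat[OF ct0] .
    also have "\<theta> x0 - \<theta> x0 = 0\<^sub>m 1 n" using ct0 by simp
    finally show ?thesis .
  qed
  have s4: "\<theta> x0 = 0\<^sub>m 1 n"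
  proof -
    have "\<theta> x0 = \<theta> x0 * 1\<^sub>m n" using right_mult_one_mat[OF ct0] by simp
    also have "\<dots> = \<theta> x0 * (\<phi> x0 * \<phi>' x0)" using finv[OF x0g] unfolding n_def by simp
    also have "\<dots> = (\<theta> x0 * \<phi> x0) * \<phi>' x0" using assoc_mult_mat[OF ct0 cf0 cf'0] by simp
    also have "\<dots> = 0\<^sub>m 1 n" using s3 left_mult_zero_mat[OF cf'0] by simp
    finally show ?thesis .
  qed
  have "\<theta> x0 * (\<alpha> x0 * \<iota> x0) = 0\<^sub>m 1 1" using s4 left_mult_zero_mat[OF cai0] by simp
  hence "(1\<^sub>m 1 :: 'a mat) = 0\<^sub>m 1 1" using s1 by simp
  thus False using one_neq_zero11 by blast
qed

end

theorem mainTheorem16: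
  fixes ms :: "nat list" and S :: "nat list set"
  assumes "ms \<noteq> []" and "\<forall>i<length ms. 0 < ms ! i"
    and "spread ms S"
  shows "minimals S \<subseteq> Qset ms S \<and> cover ms S \<subseteq> Qset ms S \<and>
    (\<forall>(C :: 'a::field rep) \<rho> R. min_spread_rad_approx ms (spread_rep S) C \<rho> \<and> spread ms R \<and>
        direct_summand ms (spread_rep R) C \<longrightarrow>
        minimals R \<subseteq> Qset ms S \<and> cover ms R \<subseteq> Qset ms S)"
proof -
  interpret q: qctx ms S using assms by unfold_locales auto
  have A: "minimals S \<subseteq> Qset ms S \<and> cover ms S \<subseteq> Qset ms S" using q.part12 .
  have B: "\<forall>(C :: 'a::field rep) \<rho> R. min_spread_rad_approx ms (spread_rep S) C \<rho> \<and> spread ms R \<and>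
        direct_summand ms (spread_rep R) C \<longrightarrow>
        minimals R \<subseteq> Qset ms S \<and> cover ms R \<subseteq> Qset ms S"
  proof (intro allI impI)
    fix C :: "'a rep" and \<rho> :: "nat list \<Rightarrow> 'a mat" and R :: "nat list set"
    assume H: "min_spread_rad_approx ms (spread_rep S) C \<rho> \<and> spread ms R \<and> direct_summand ms (spread_rep R) C"
    have fc: "fclosed ms S R" using q.part3[OF conjunct1[OF H] conjunct1[OF conjunct2[OF H]] conjunct2[OF conjunct2[OF H]]] .
    show "minimals R \<subseteq> Qset ms S \<and> cover ms R \<subseteq> Qset ms S"
      using fclosed_min_cover[OF assms(1) spread_grid[OF conjunct1[OF conjunct2[OF H]]] fc] .
  qed
  show ?thesis using A B by blast
qed

end
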